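(* For any $h,v$ with $hv\ge n^2$, there is an $[h,v]$-scheme for \textsc{TriangleCount-Adj} on $n$-vertex graphs.
   Context: Annotated streaming model (schemes): a space-bounded Verifier reads an input stream $\sigma$; after the stream ends, an all-powerful Prover sends a help message to the Verifier as a stream. A scheme for a function $f$ consists of the Verifier's randomized streaming algorithm, the honest Prover's help function, and the Verifier's output procedure, outputting a value in $\mathrm{range}(f)\cup\{\bot\}$ ($\bot$ = reject), with perfect completeness (honest help makes the Verifier output $f(\sigma)$ with probability 1) and soundness error at most $1/3$ (for every $\sigma$ and every help message, the probability of outputting a value outside $\{f(\sigma),\bot\}$ is at most $1/3$). An $[h,v]$-scheme uses $\tilde{O}(h)$ bits of help and $\tilde{O}(v)$ bits of Verifier space, where $\tilde{O}$ hides factors polynomial in $\log n$. \textsc{TriangleCount-Adj}: the input is a graph on vertex set $[n]$ given in the adjacency-list (vertex-arrival) streaming model, where for each vertex $v$ the stream presents its full neighbor list $N(v)$ contiguously (vertices appear in some order, each with its neighbor list). The desired output is the number of triangles in the graph. *)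

theory Defs
  imports "HOL-Probability.Probability_Mass_Function"
begin

definition simple_graph :: "nat \<Rightarrow> (nat \<Rightarrow> nat \<Rightarrow> bool) \<Rightarrow> bool" where
  "simple_graph n E \<longleftrightarrow>
     (\<forall>u w. E u w \<longrightarrow> u < n \<and> w < n) \<and> (\<forall>u w. E u w \<longrightarrow> E w u) \<and> (\<forall>u. \<not> E u u)"

definition triangle_count :: "nat \<Rightarrow> (nat \<Rightarrow> nat \<Rightarrow> bool) \<Rightarrow> nat" where
  "triangle_count n E =
     card {(a, b, c). a < b \<and> b < c \<and> c < n \<and> E a b \<and> E b c \<and> E a c}"

text \<open>Adjacency-list (vertex-arrival) stream: a stream token is a pair (v, w) meaning
  "w is a neighbour of v".\<close>
definition adj_stream :: "nat \<Rightarrow> (nat \<Rightarrow> nat \<Rightarrow> bool) \<Rightarrow> (nat \<times> nat) list \<Rightarrow> bool" where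
  "adj_stream n E \<sigma> \<longleftrightarrow>
     (\<exists>vs ls. distinct vs \<and> set vs = {..<n} \<and> length ls = length vs \<and>
        (\<forall>i < length vs. distinct (ls ! i) \<and> set (ls ! i) = {w. E (vs ! i) w}) \<and>
        \<sigma> = concat (map2 (\<lambda>v l. map (Pair v) l) vs ls))"

fun run :: "('s \<Rightarrow> 'a \<Rightarrow> 's pmf) \<Rightarrow> 'a list \<Rightarrow> 's \<Rightarrow> 's pmf" where
  "run step [] s = return_pmf s"
| "run step (x # xs) s = bind_pmf (step s x) (run step xs)"

definition final_state ::
  "bool list pmf \<Rightarrow> (bool list \<Rightarrow> nat \<times> nat \<Rightarrow> bool list pmf) \<Rightarrow> (bool list \<Rightarrow> bool \<Rightarrow> bool list pmf)
   \<Rightarrow> (nat \<times> nat) list \<Rightarrow> bool list \<Rightarrow> bool list pmf" where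
  "final_state init stepI stepH \<sigma> m =
     bind_pmf init (\<lambda>s0. bind_pmf (run stepI \<sigma> s0) (run stepH m))"

text \<open>The Verifier's memory is a bit string of length at most S; it starts in a
  random state (init), processes input tokens and help bits with randomized transitions
  (stepI, stepH) that keep the memory within S bits, and finally outputs a value
  (None = reject).\<close>
definition tc_scheme ::
  "nat \<Rightarrow> nat \<Rightarrow> nat \<Rightarrow> bool list pmf \<Rightarrow> (bool list \<Rightarrow> nat \<times> nat \<Rightarrow> bool list pmf)
   \<Rightarrow> (bool list \<Rightarrow> bool \<Rightarrow> bool list pmf) \<Rightarrow> (bool list \<Rightarrow> nat option)
   \<Rightarrow> ((nat \<times> nat) list \<Rightarrow> bool list) \<Rightarrow> bool" where
  "tc_scheme n H S init stepI stepH out help \<longleftrightarrow>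
     (\<forall>s \<in> set_pmf init. length s \<le> S) \<and>
     (\<forall>s x. length s \<le> S \<longrightarrow> (\<forall>s' \<in> set_pmf (stepI s x). length s' \<le> S)) \<and>
     (\<forall>s b. length s \<le> S \<longrightarrow> (\<forall>s' \<in> set_pmf (stepH s b). length s' \<le> S)) \<and>
     (\<forall>\<sigma>. length (help \<sigma>) \<le> H) \<and>
     (\<forall>E \<sigma>. simple_graph n E \<longrightarrow> adj_stream n E \<sigma> \<longrightarrow>
        measure_pmf.prob (map_pmf out (final_state init stepI stepH \<sigma> (help \<sigma>)))
          {Some (triangle_count n E)} = 1 \<and>
        (\<forall>m. measure_pmf.prob (map_pmf out (final_state init stepI stepH \<sigma> m))
          (- {Some (triangle_count n E), None}) \<le> 1/3))"

end

theory Submission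
  imports Defs "HOL-Computational_Algebra.Polynomial" "HOL-Computational_Algebra.Primes"
begin

lemma mult_le_self:
  fixes p x :: nat
  assumes "prime p" "x > 0"
  shows "multiplicity p x \<le> x"
proof -
  have "p ^ multiplicity p x dvd x" by (rule multiplicity_dvd)
  hence a: "p ^ multiplicity p x \<le> x" using assms(2) by (rule dvd_imp_le)
  have b: "multiplicity p x < 2 ^ multiplicity p x" by (rule less_exp)
  have c: "2 ^ multiplicity p x \<le> p ^ multiplicity p x"
    by (rule power_mono) (use prime_ge_2_nat[OF assms(1)] in auto)
  from a b c show ?thesis by linarith
qed

lemma mult_card:
  fixes p x :: nat
  assumes "prime p" "x > 0"
  shows "multiplicity p x = card {i\<in>{1..x}. p ^ i dvd x}"
proof -
  have nu: "\<not> is_unit p" using prime_gt_1_nat[OF assms(1)] by auto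
  have x0: "x \<noteq> 0" using assms(2) by simp
  have m: "multiplicity p x \<le> x" by (rule mult_le_self[OF assms])
  have "{i\<in>{1..x}. p ^ i dvd x} = {1..multiplicity p x}"
  proof (rule set_eqI)
    fix i
    show "i \<in> {i\<in>{1..x}. p ^ i dvd x} \<longleftrightarrow> i \<in> {1..multiplicity p x}"
      using power_dvd_iff_le_multiplicity[OF x0 nu, of i] m by auto
  qed
  thus ?thesis by simp
qed

lemma suc_div_split:
  fixes n q :: nat
  assumes "q > 0"
  shows "Suc n div q = n div q + (if q dvd Suc n then 1 else 0)"
  by (simp add: div_Suc dvd_eq_mod_eq_0)

lemma legendre:
  fixes p :: nat
  assumes "prime p"
  shows "multiplicity p (fact n :: nat) = (\<Sum>i\<in>{1..n}. n div p ^ i)"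
proof (induction n)
  case 0
  then show ?case by simp
next
  case (Suc n)
  have p1: "p > 1" using prime_gt_1_nat[OF assms] .
  have A: "multiplicity p (fact (Suc n) :: nat) = multiplicity p (Suc n) + multiplicity p (fact n :: nat)"
  proof -
    have "multiplicity p (fact (Suc n) :: nat) = multiplicity p (Suc n * fact n)"
      by (simp add: fact_Suc)
    also have "\<dots> = multiplicity p (Suc n) + multiplicity p (fact n :: nat)"
      by (rule prime_elem_multiplicity_mult_distrib) (use assms in simp_all)
    finally show ?thesis .
  qed
  have B: "multiplicity p (Suc n) = (\<Sum>i\<in>{1..Suc n}. if p ^ i dvd Suc n then 1 else 0)"
  proof -
    have "multiplicity p (Suc n) = card {i\<in>{1..Suc n}. p ^ i dvd Suc n}"
      by (rule mult_card[OF assms]) simp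
    also have "\<dots> = (\<Sum>i\<in>{1..Suc n}. if p ^ i dvd Suc n then 1 else 0)"
      using sum.inter_filter[of "{1..Suc n}" "\<lambda>_. 1::nat" "\<lambda>i. p ^ i dvd Suc n"] by simp
    finally show ?thesis .
  qed
  have C: "multiplicity p (fact n :: nat) = (\<Sum>i\<in>{1..Suc n}. n div p ^ i)"
  proof -
    have "n < 2 ^ Suc n" using less_exp[of "Suc n"] by simp
    moreover have "(2::nat) ^ Suc n \<le> p ^ Suc n" by (rule power_mono) (use p1 in auto)
    ultimately have "n < p ^ Suc n" by linarith
    hence "n div p ^ Suc n = 0" by simp
    thus ?thesis using Suc.IH by simp
  qed
  have D: "(\<Sum>i\<in>{1..Suc n}. if p ^ i dvd Suc n then 1 else 0) + (\<Sum>i\<in>{1..Suc n}. n div p ^ i)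
      = (\<Sum>i\<in>{1..Suc n}. Suc n div p ^ i)"
  proof -
    have *: "\<And>i. (if p ^ i dvd Suc n then 1 else 0) + n div p ^ i = Suc n div p ^ i"
      using suc_div_split[of "p ^ _" n] p1 by simp
    have "(\<Sum>i\<in>{1..Suc n}. (if p ^ i dvd Suc n then 1 else 0) + n div p ^ i) = (\<Sum>i\<in>{1..Suc n}. Suc n div p ^ i)"
      using * by (rule sum.cong[OF refl])
    thus ?thesis by (simp add: sum.distrib)
  qed
  show ?case using A B C D by linarith
qed

lemma div2_eq:
  fixes m q :: nat
  assumes "q > 0"
  shows "2 * m div q = 2 * (m div q) + (2 * (m mod q)) div q"
proof -
  have "2 * m = q * (2 * (m div q)) + 2 * (m mod q)"
    by (metis distrib_left mult.left_commute div_mult_mod_eq mult.commute)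
  thus ?thesis using assms by simp
qed

lemma div2_bound:
  fixes m q :: nat
  assumes "q > 0"
  shows "2 * m div q \<le> 2 * (m div q) + 1"
proof -
  have "2 * m = q * (2 * (m div q)) + 2 * (m mod q)"
    by (metis distrib_left mult.left_commute div_mult_mod_eq mult.commute)
  hence "2 * m div q = 2 * (m div q) + (2 * (m mod q)) div q"
    using assms by simp
  moreover have "2 * (m mod q) < 2 * q" using assms by simp
  hence "(2 * (m mod q)) div q \<le> 1"
    using assms by (metis less_mult_imp_div_less Suc_1 less_Suc_eq_le)
  ultimately show ?thesis by simp
qed

lemma binom_mult_count:
  fixes p m :: nat
  assumes p: "prime p" and m: "m > 0"
  shows "multiplicity p (2 * m choose m) \<le> card {i\<in>{1..2*m}. p ^ i \<le> 2 * m}"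
proof -
  define C where "C = (2 * m choose m)"
  have p1: "p > 1" using prime_gt_1_nat[OF p] .
  have C0: "C \<noteq> 0" unfolding C_def by simp
  have f: "fact (2 * m) = (fact m * fact m * C :: nat)"
    using binomial_fact_lemma[of m "2 * m"] unfolding C_def by (simp add: mult_2)
  have "multiplicity p (fact (2 * m) :: nat) = multiplicity p (fact m * fact m :: nat) + multiplicity p C"
    unfolding f by (rule prime_elem_multiplicity_mult_distrib) (use p C0 in simp_all)
  also have "multiplicity p (fact m * fact m :: nat) = 2 * multiplicity p (fact m :: nat)"
    by (subst prime_elem_multiplicity_mult_distrib) (use p in simp_all)
  finally have e1: "multiplicity p (fact (2 * m) :: nat) = 2 * multiplicity p (fact m :: nat) + multiplicity p C" .
  have l1: "multiplicity p (fact (2*m) :: nat) = (\<Sum>i\<in>{1..2*m}. 2 * m div p ^ i)"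
    by (rule legendre[OF p])
  have l2: "multiplicity p (fact m :: nat) = (\<Sum>i\<in>{1..2*m}. m div p ^ i)"
  proof -
    have "(\<Sum>i\<in>{1..2*m}. m div p ^ i) = (\<Sum>i\<in>{1..m}. m div p ^ i) + (\<Sum>i\<in>{m+1..2*m}. m div p ^ i)"
      by (subst sum.union_disjoint[symmetric]) (auto intro!: sum.cong)
    also have "(\<Sum>i\<in>{m+1..2*m}. m div p ^ i) = 0"
    proof (rule sum.neutral, rule ballI)
      fix i assume "i \<in> {m+1..2*m}"
      hence "i > m" by simp
      have "m < 2 ^ m" by (rule less_exp)
      also have "(2::nat) ^ m \<le> p ^ m" by (rule power_mono) (use p1 in simp_all)
      also have "p ^ m \<le> p ^ i" by (rule power_increasing) (use \<open>i > m\<close> p1 in simp_all)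
      finally show "m div p ^ i = 0" by simp
    qed
    finally show ?thesis using legendre[OF p, of m] by simp
  qed
  have pw: "\<And>i. 2 * (m div p ^ i) \<le> 2 * m div p ^ i"
  proof -
    fix i
    have "p ^ i > 0" using p1 by simp
    from div2_eq[OF this, of m] show "2 * (m div p ^ i) \<le> 2 * m div p ^ i" by simp
  qed
  have "multiplicity p C = (\<Sum>i\<in>{1..2*m}. 2 * m div p ^ i) - (\<Sum>i\<in>{1..2*m}. 2 * (m div p ^ i))"
    using e1 l1 l2 by (simp add: sum_distrib_left)
  also have "\<dots> = (\<Sum>i\<in>{1..2*m}. 2 * m div p ^ i - 2 * (m div p ^ i))"
    by (rule sum_subtractf_nat[symmetric]) (use pw in auto)
  also have "\<dots> \<le> (\<Sum>i\<in>{1..2*m}. if p ^ i \<le> 2 * m then 1 else 0)"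
  proof (rule sum_mono)
    fix i
    show "2 * m div p ^ i - 2 * (m div p ^ i) \<le> (if p ^ i \<le> 2 * m then 1 else 0)"
    proof (cases "p ^ i \<le> 2 * m")
      case True
      have "p ^ i > 0" using p1 by simp
      from div2_bound[OF this, of m] True show ?thesis by simp
    next
      case False
      hence "2 * m div p ^ i = 0" by simp
      thus ?thesis by simp
    qed
  qed
  also have "\<dots> = card {i\<in>{1..2*m}. p ^ i \<le> 2 * m}"
    using sum.inter_filter[of "{1..2*m}" "\<lambda>_. 1::nat" "\<lambda>i. p ^ i \<le> 2 * m"] by simp
  finally show ?thesis unfolding C_def .
qed

lemma binom_pow_bound:
  fixes p m :: nat
  assumes p: "prime p" and m: "m > 0"
  shows "p ^ multiplicity p (2 * m choose m) \<le> 2 * m"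
proof (rule ccontr)
  define k where "k = multiplicity p (2 * m choose m)"
  have p1: "p > 1" using prime_gt_1_nat[OF p] .
  assume "\<not> p ^ multiplicity p (2 * m choose m) \<le> 2 * m"
  hence big: "2 * m < p ^ k" unfolding k_def by simp
  have "k \<noteq> 0" using big m by (intro notI) simp
  have "{i\<in>{1..2*m}. p ^ i \<le> 2 * m} \<subseteq> {1..<k}"
  proof
    fix i assume "i \<in> {i\<in>{1..2*m}. p ^ i \<le> 2 * m}"
    hence "i \<ge> 1" "p ^ i < p ^ k" using big by auto
    hence "i < k" using p1 power_less_imp_less_exp by blast
    thus "i \<in> {1..<k}" using \<open>i \<ge> 1\<close> by simp
  qed
  hence "card {i\<in>{1..2*m}. p ^ i \<le> 2 * m} \<le> card {1..<k}" by (intro card_mono) auto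
  also have "\<dots> < k" using \<open>k \<noteq> 0\<close> by simp
  finally show False using binom_mult_count[OF p m] unfolding k_def by simp
qed

lemma aux_pow4:
  fixes L :: nat
  assumes "L \<ge> 2"
  shows "2 * L ^ 3 \<le> 4 ^ L"
  using assms
proof (induction L rule: nat_induct_at_least)
  case base
  then show ?case by simp
next
  case (Suc L)
  have "(Suc L) ^ 3 \<le> 4 * L ^ 3"
  proof -
    have "(Suc L) ^ 3 = L^3 + 3 * L^2 + 3 * L + 1" by (simp add: power3_eq_cube power2_eq_square algebra_simps)
    moreover have "3 * L^2 + 3 * L + 1 \<le> 3 * L^3"
    proof -
      have "L * L \<ge> 2 * L" using Suc.hyps by simp
      hence "L^3 \<ge> 2 * L^2" using Suc.hyps by (simp add: power3_eq_cube power2_eq_square)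
      moreover have "L^2 \<ge> 2 * L" using \<open>L * L \<ge> 2 * L\<close> by (simp add: power2_eq_square)
      ultimately show ?thesis using Suc.hyps by linarith
    qed
    ultimately show ?thesis by linarith
  qed
  hence "2 * (Suc L) ^ 3 \<le> 4 * (2 * L ^ 3)" by simp
  also have "\<dots> \<le> 4 * 4 ^ L" using Suc.IH by simp
  finally show ?case by simp
qed

lemma aux_contra:
  fixes L :: nat
  assumes "L \<ge> 2"
  shows "(2 * L ^ 3) ^ (L + 1) < 4 ^ (L ^ 3)"
proof -
  have "(2 * L ^ 3) ^ (L + 1) \<le> (4 ^ L) ^ (L + 1)"
    by (rule power_mono) (use aux_pow4[OF assms] in simp_all)
  also have "\<dots> = 4 ^ (L * (L + 1))" by (rule power_mult[symmetric])
  also have "\<dots> < 4 ^ (L ^ 3)"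
  proof (rule power_strict_increasing)
    have "L * (L + 1) < L * (L * L)"
    proof (rule mult_strict_left_mono)
      have "L * L \<ge> 2 * L" using assms by simp
      thus "L + 1 < L * L" using assms by linarith
    qed (use assms in simp)
    thus "L * (L + 1) < L ^ 3" by (simp add: power3_eq_cube)
  qed simp
  finally show ?thesis .
qed

lemma prime_between:
  fixes L :: nat
  assumes L: "L \<ge> 2"
  shows "\<exists>p. prime p \<and> L < p \<and> p \<le> 2 * L ^ 3"
proof (rule ccontr)
  assume no: "\<not> ?thesis"
  define m where "m = L ^ 3"
  have m0: "m > 0" unfolding m_def using L by simp
  define C where "C = (2 * m choose m)"
  have C0: "C \<noteq> 0" unfolding C_def by simp
  have Cdvd: "C dvd fact (2 * m)"
    using binomial_fact_lemma[of m "2 * m"] unfolding C_def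
    by (metis dvd_triv_right le_add2 mult_2)
  have pf: "prime_factors C \<subseteq> {1..L}"
  proof
    fix q assume q: "q \<in> prime_factors C"
    hence qp: "prime q" and qd: "q dvd C" by auto
    from qd Cdvd have "q dvd fact (2 * m)" by (rule dvd_trans)
    hence "q \<le> 2 * m" using prime_dvd_fact_iff[OF qp] by simp
    hence "q \<le> L" using no qp unfolding m_def by (meson not_le)
    thus "q \<in> {1..L}" using prime_ge_1_nat[OF qp] by simp
  qed
  hence cardpf: "card (prime_factors C) \<le> L"
    using card_mono[OF _ pf] by simp
  have "C = (\<Prod>q\<in>prime_factors C. q ^ multiplicity q C)"
    using prod_prime_factors[OF C0] by simp
  also have "\<dots> \<le> (\<Prod>q\<in>prime_factors C. 2 * m)"
    by (rule prod_mono) (use binom_pow_bound m0 in \<open>auto simp: C_def\<close>)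
  also have "\<dots> = (2 * m) ^ card (prime_factors C)" by simp
  also have "\<dots> \<le> (2 * m) ^ L"
    by (rule power_increasing) (use cardpf m0 in simp_all)
  finally have CL: "C \<le> (2 * m) ^ L" .
  have "4 ^ m / (2 * real m) \<le> real C"
    unfolding C_def by (rule central_binomial_lower_bound[OF m0])
  hence "real (4 ^ m) \<le> real C * (2 * real m)" using m0 by (simp add: field_simps)
  hence "4 ^ m \<le> C * (2 * m)" by (metis of_nat_le_iff of_nat_mult of_nat_numeral)
  also have "\<dots> \<le> (2 * m) ^ L * (2 * m)" using CL by simp
  also have "\<dots> = (2 * m) ^ (L + 1)" by simp
  finally have "4 ^ (L ^ 3) \<le> (2 * L ^ 3) ^ (L + 1)" unfolding m_def .
  with aux_contra[OF L] show False by simp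
qed


type_synonym istate = "nat option \<times> (nat \<Rightarrow> nat) \<times> (nat \<Rightarrow> nat) \<times> (nat \<times> nat \<Rightarrow> nat) \<times> (nat \<times> nat \<Rightarrow> nat) \<times> bool"

lemma ordered_triangles:
  assumes g: "simple_graph n E"
  shows "card {(a, b, c). a < n \<and> b < n \<and> c < n \<and> E a b \<and> E b c \<and> E a c} = 6 * triangle_count n E"
proof -
  define S where "S = {(a, b, c). a < b \<and> b < c \<and> c < n \<and> E a b \<and> E b c \<and> E a c}"
  define OT where "OT = {(a, b, c). a < n \<and> b < n \<and> c < n \<and> E a b \<and> E b c \<and> E a c}"
  have sym: "\<And>u w. E u w \<Longrightarrow> E w u" and irr: "\<And>u. \<not> E u u"
    using g unfolding simple_graph_def by blast+
  have finS: "finite S" unfolding S_def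
    by (rule finite_subset[of _ "{..<n} \<times> {..<n} \<times> {..<n}"]) auto
  define f1 where "f1 = (\<lambda>(a::nat, b::nat, c::nat). (a, b, c))"
  define f2 where "f2 = (\<lambda>(a::nat, b::nat, c::nat). (a, c, b))"
  define f3 where "f3 = (\<lambda>(a::nat, b::nat, c::nat). (b, a, c))"
  define f4 where "f4 = (\<lambda>(a::nat, b::nat, c::nat). (b, c, a))"
  define f5 where "f5 = (\<lambda>(a::nat, b::nat, c::nat). (c, a, b))"
  define f6 where "f6 = (\<lambda>(a::nat, b::nat, c::nat). (c, b, a))"
  have inj: "inj f1" "inj f2" "inj f3" "inj f4" "inj f5" "inj f6"
    unfolding f1_def f2_def f3_def f4_def f5_def f6_def inj_def by auto
  have cards: "card (f1 ` S) = card S" "card (f2 ` S) = card S" "card (f3 ` S) = card S"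
     "card (f4 ` S) = card S" "card (f5 ` S) = card S" "card (f6 ` S) = card S"
    using inj by (auto intro!: card_image inj_on_subset[of _ UNIV])
  have fin: "finite (f1 ` S)" "finite (f2 ` S)" "finite (f3 ` S)" "finite (f4 ` S)"
    "finite (f5 ` S)" "finite (f6 ` S)" using finS by auto
  have OU: "OT = f1 ` S \<union> f2 ` S \<union> f3 ` S \<union> f4 ` S \<union> f5 ` S \<union> f6 ` S"
  proof
    show "OT \<subseteq> f1 ` S \<union> f2 ` S \<union> f3 ` S \<union> f4 ` S \<union> f5 ` S \<union> f6 ` S"
    proof
      fix t assume "t \<in> OT"
      then obtain a b c where t: "t = (a, b, c)" and abc: "a < n" "b < n" "c < n" "E a b" "E b c" "E a c"
        unfolding OT_def by auto
      have d: "a \<noteq> b" "b \<noteq> c" "a \<noteq> c" using abc irr by auto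
      have e: "E b a" "E c b" "E c a" using abc sym by auto
      consider "a < b" "b < c" | "a < c" "c < b" | "b < a" "a < c" | "b < c" "c < a"
        | "c < a" "a < b" | "c < b" "b < a"
        using d by linarith
      then show "t \<in> f1 ` S \<union> f2 ` S \<union> f3 ` S \<union> f4 ` S \<union> f5 ` S \<union> f6 ` S"
      proof cases
        case 1
        hence "(a, b, c) \<in> S" unfolding S_def using abc e by auto
        thus ?thesis unfolding t f1_def by (auto intro: image_eqI)
      next
        case 2
        hence "(a, c, b) \<in> S" unfolding S_def using abc e by auto
        hence "f2 (a, c, b) \<in> f2 ` S" by blast
        thus ?thesis unfolding t f2_def by auto
      next
        case 3
        hence "(b, a, c) \<in> S" unfolding S_def using abc e by auto
        hence "f3 (b, a, c) \<in> f3 ` S" by blast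
        thus ?thesis unfolding t f3_def by auto
      next
        case 4
        hence "(b, c, a) \<in> S" unfolding S_def using abc e by auto
        hence "f5 (b, c, a) \<in> f5 ` S" by blast
        thus ?thesis unfolding t f5_def by auto
      next
        case 5
        hence "(c, a, b) \<in> S" unfolding S_def using abc e by auto
        hence "f4 (c, a, b) \<in> f4 ` S" by blast
        thus ?thesis unfolding t f4_def by auto
      next
        case 6
        hence "(c, b, a) \<in> S" unfolding S_def using abc e by auto
        hence "f6 (c, b, a) \<in> f6 ` S" by blast
        thus ?thesis unfolding t f6_def by auto
      qed
    qed
  next
    show "f1 ` S \<union> f2 ` S \<union> f3 ` S \<union> f4 ` S \<union> f5 ` S \<union> f6 ` S \<subseteq> OT"
      unfolding OT_def S_def f1_def f2_def f3_def f4_def f5_def f6_def using sym by auto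
  qed
  have disj: "f1 ` S \<inter> f2 ` S = {}" "(f1 ` S \<union> f2 ` S) \<inter> f3 ` S = {}"
    "(f1 ` S \<union> f2 ` S \<union> f3 ` S) \<inter> f4 ` S = {}"
    "(f1 ` S \<union> f2 ` S \<union> f3 ` S \<union> f4 ` S) \<inter> f5 ` S = {}"
    "(f1 ` S \<union> f2 ` S \<union> f3 ` S \<union> f4 ` S \<union> f5 ` S) \<inter> f6 ` S = {}"
    unfolding S_def f1_def f2_def f3_def f4_def f5_def f6_def by auto
  have "card OT = 6 * card S"
    unfolding OU
    by (simp add: card_Un_disjoint fin disj cards)
  moreover have "card S = triangle_count n E" unfolding S_def triangle_count_def ..
  ultimately show ?thesis unfolding OT_def by simp
qed


lemma prime_int_of_nat: "prime (p::nat) \<Longrightarrow> prime (int p)"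
  by simp

lemma poly_roots_modp:
  fixes d :: "int poly" and p :: nat
  assumes p: "prime p" and nz: "\<not> (int p dvd coeff d i)"
  shows "card {r \<in> {..<p}. int p dvd poly d (int r)} \<le> degree d"
  using nz
proof (induction "degree d" arbitrary: d i rule: less_induct)
  case less
  define R where "R = (\<lambda>d. {r \<in> {..<p}. int p dvd poly d (int r)})"
  have pp: "prime (int p)" using prime_int_of_nat[OF p] .
  show ?case
  proof (cases "R d = {}")
    case True
    hence "{r \<in> {..<p}. int p dvd poly d (int r)} = {}" unfolding R_def .
    then show ?thesis by (metis card.empty le0)
  next
    case False
    then obtain a where a: "a \<in> R d" by blast
    hence ap: "a < p" and ad: "int p dvd poly d (int a)" unfolding R_def by auto
    define q where "q = synthetic_div d (int a)"
    have dq: "d = [:- int a, 1:] * q + [:poly d (int a):]"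
      unfolding q_def by (rule synthetic_div_correct'[symmetric])
    have degpos: "degree d > 0"
    proof (rule ccontr)
      assume "\<not> degree d > 0"
      hence "degree d = 0" by simp
      then obtain c where c: "d = [:c:]" by (meson degree_eq_zeroE)
      hence "poly d (int a) = c" by simp
      with ad have "int p dvd c" by simp
      hence "\<forall>j. int p dvd coeff d j" using c by (auto simp: coeff_pCons split: nat.splits)
      with less.prems show False by blast
    qed
    have degq: "degree q < degree d" unfolding q_def degree_synthetic_div using degpos by simp
    have "\<exists>j. \<not> int p dvd coeff q j"
    proof (rule ccontr)
      assume "\<not> (\<exists>j. \<not> int p dvd coeff q j)"
      hence allq: "\<forall>j. int p dvd coeff q j" by blast
      define c0 where "c0 = poly d (int a)"
      have dq': "d = [:- int a, 1:] * q + [:c0:]" using dq unfolding c0_def .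
      have c0d: "int p dvd c0" using ad unfolding c0_def .
      have "\<forall>j. int p dvd coeff d j"
      proof
        fix j
        have cj: "coeff d j = - int a * coeff q j + (case j of 0 \<Rightarrow> 0 | Suc k \<Rightarrow> coeff q k) + (if j = 0 then c0 else 0)"
          by (subst dq') (simp add: mult_pCons_left coeff_pCons split: nat.splits)
        show "int p dvd coeff d j"
          unfolding cj using allq c0d by (auto split: nat.splits)
      qed
      with less.prems show False by blast
    qed
    then obtain j where j: "\<not> int p dvd coeff q j" by blast
    have IH: "card (R q) \<le> degree q"
      unfolding R_def using less.hyps[OF degq j] .
    have sub: "R d \<subseteq> insert a (R q)"
    proof
      fix r assume r: "r \<in> R d"
      show "r \<in> insert a (R q)"
      proof (cases "r = a")
        case True then show ?thesis by simp
      next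
        case False
        from r have rp: "r < p" and rd: "int p dvd poly d (int r)" unfolding R_def by auto
        have "poly d (int r) = (int r - int a) * poly q (int r) + poly d (int a)"
          by (subst dq) (simp add: algebra_simps)
        with rd ad have "int p dvd (int r - int a) * poly q (int r)"
          by (metis dvd_diff add_diff_cancel_right')
        moreover have "\<not> int p dvd (int r - int a)"
        proof
          assume "int p dvd (int r - int a)"
          moreover have "int r - int a \<noteq> 0" using False by simp
          ultimately have "\<bar>int p\<bar> \<le> \<bar>int r - int a\<bar>" by (rule dvd_imp_le_int[rotated])
          with rp ap show False by simp
        qed
        ultimately have "int p dvd poly q (int r)" using pp prime_dvd_mult_iff by blast
        thus ?thesis unfolding R_def using rp by simp
      qed
    qed
    have "card (R d) \<le> card (insert a (R q))"
      by (rule card_mono) (use sub in \<open>auto simp: R_def\<close>)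
    also have "\<dots> \<le> Suc (card (R q))" by (rule card_insert_le_m1) simp_all
    also have "\<dots> \<le> Suc (degree q)" using IH by simp
    also have "\<dots> \<le> degree d" using degq by simp
    finally show ?thesis unfolding R_def .
  qed
qed


lemma encode_scheme:
  fixes X :: "'s set" and initf :: "'s pmf" and stI :: "'s \<Rightarrow> nat \<times> nat \<Rightarrow> 's"
    and stH :: "'s \<Rightarrow> bool \<Rightarrow> 's" and outf :: "'s \<Rightarrow> nat option"
  assumes finX: "finite X" and cardX: "card X \<le> 2 ^ S" and initX: "set_pmf initf \<subseteq> X"
    and stIX: "\<And>s x. s \<in> X \<Longrightarrow> stI s x \<in> X"
    and stHX: "\<And>s b. s \<in> X \<Longrightarrow> stH s b \<in> X"
  shows "\<exists>init stepI stepH out.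
     (\<forall>s \<in> set_pmf init. length s \<le> S) \<and>
     (\<forall>s x. length s \<le> S \<longrightarrow> (\<forall>s' \<in> set_pmf (stepI s x). length s' \<le> S)) \<and>
     (\<forall>s b. length s \<le> S \<longrightarrow> (\<forall>s' \<in> set_pmf (stepH s b). length s' \<le> S)) \<and>
     (\<forall>\<sigma> m. map_pmf out (final_state init stepI stepH \<sigma> m)
         = map_pmf (\<lambda>s0. outf (foldl stH (foldl stI s0 \<sigma>) m)) initf)"
proof -
  define B where "B = {xs :: bool list. length xs = S}"
  have finB: "finite B" unfolding B_def using finite_lists_length_eq[of "UNIV :: bool set" S] by simp
  have cardB: "card B = 2 ^ S" unfolding B_def using card_lists_length_eq[of "UNIV :: bool set" S] by simp
  obtain enc where encB: "enc ` X \<subseteq> B" and inj: "inj_on enc X"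
    using card_le_inj[OF finX finB] cardX cardB by auto
  define dec where "dec = the_inv_into X enc"
  have dec_enc: "\<And>s. s \<in> X \<Longrightarrow> dec (enc s) = s"
    unfolding dec_def by (rule the_inv_into_f_f[OF inj])
  define stepI where "stepI = (\<lambda>t x. return_pmf (if t \<in> enc ` X then enc (stI (dec t) x) else t))"
  define stepH where "stepH = (\<lambda>t b. return_pmf (if t \<in> enc ` X then enc (stH (dec t) b) else t))"
  define init where "init = map_pmf enc initf"
  define out where "out = (\<lambda>t. outf (dec t))"
  have lenX: "\<And>s. s \<in> X \<Longrightarrow> length (enc s) = S" using encB unfolding B_def by auto
  have runI: "\<And>s. s \<in> X \<Longrightarrow> run stepI \<sigma> (enc s) = return_pmf (enc (foldl stI s \<sigma>))" for \<sigma>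
  proof (induction \<sigma>)
    case Nil then show ?case by simp
  next
    case (Cons x xs)
    show ?case using Cons.prems Cons.IH[of "stI s x"] stIX
      by (simp add: stepI_def dec_enc bind_return_pmf)
  qed
  have runH: "\<And>s. s \<in> X \<Longrightarrow> run stepH m (enc s) = return_pmf (enc (foldl stH s m))" for m
  proof (induction m)
    case Nil then show ?case by simp
  next
    case (Cons x xs)
    show ?case using Cons.prems Cons.IH[of "stH s x"] stHX
      by (simp add: stepH_def dec_enc bind_return_pmf)
  qed
  have foldIX: "\<And>s. s \<in> X \<Longrightarrow> foldl stI s \<sigma> \<in> X" for \<sigma>
    by (induction \<sigma>) (auto simp: stIX)
  have foldHX: "\<And>s. s \<in> X \<Longrightarrow> foldl stH s m \<in> X" for m
    by (induction m) (auto simp: stHX)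
  have main: "map_pmf out (final_state init stepI stepH \<sigma> m)
         = map_pmf (\<lambda>s0. outf (foldl stH (foldl stI s0 \<sigma>) m)) initf" for \<sigma> m
  proof -
    have "final_state init stepI stepH \<sigma> m
        = bind_pmf initf (\<lambda>s0. bind_pmf (run stepI \<sigma> (enc s0)) (run stepH m))"
      unfolding final_state_def init_def by (simp add: bind_map_pmf o_def)
    also have "\<dots> = bind_pmf initf (\<lambda>s0. return_pmf (enc (foldl stH (foldl stI s0 \<sigma>) m)))"
    proof (rule bind_pmf_cong[OF refl])
      fix s0 assume "s0 \<in> set_pmf initf"
      hence s0: "s0 \<in> X" using initX by auto
      show "bind_pmf (run stepI \<sigma> (enc s0)) (run stepH m) = return_pmf (enc (foldl stH (foldl stI s0 \<sigma>) m))"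
        using runI[OF s0] runH[OF foldIX[OF s0]] by (simp add: bind_return_pmf)
    qed
    also have "\<dots> = map_pmf (\<lambda>s0. enc (foldl stH (foldl stI s0 \<sigma>) m)) initf"
      by (simp add: map_pmf_def)
    finally have "map_pmf out (final_state init stepI stepH \<sigma> m)
        = map_pmf out (map_pmf (\<lambda>s0. enc (foldl stH (foldl stI s0 \<sigma>) m)) initf)" by simp
    also have "\<dots> = map_pmf (\<lambda>s0. out (enc (foldl stH (foldl stI s0 \<sigma>) m))) initf"
      by (simp add: pmf.map_comp o_def)
    also have "\<dots> = map_pmf (\<lambda>s0. outf (foldl stH (foldl stI s0 \<sigma>) m)) initf"
    proof (rule map_pmf_cong[OF refl])
      fix s0 assume "s0 \<in> set_pmf initf"
      hence s0: "s0 \<in> X" using initX by auto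
      show "out (enc (foldl stH (foldl stI s0 \<sigma>) m)) = outf (foldl stH (foldl stI s0 \<sigma>) m)"
        unfolding out_def using dec_enc foldHX foldIX s0 by simp
    qed
    finally show ?thesis .
  qed
  have l1: "\<forall>s \<in> set_pmf init. length s \<le> S"
    unfolding init_def using initX lenX by auto
  have l2: "\<forall>s x. length s \<le> S \<longrightarrow> (\<forall>s' \<in> set_pmf (stepI s x). length s' \<le> S)"
    unfolding stepI_def using lenX stIX dec_enc by auto
  have l3: "\<forall>s b. length s \<le> S \<longrightarrow> (\<forall>s' \<in> set_pmf (stepH s b). length s' \<le> S)"
    unfolding stepH_def using lenX stHX dec_enc by auto
  show ?thesis using l1 l2 l3 main by blast
qed


lemma if0_mult: "(if c then a else 0) * (b::'a::semiring_0) = (if c then a * b else 0)" by simp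
lemma mult_if0: "(b::'a::semiring_0) * (if c then a else 0) = (if c then b * a else 0)" by simp
lemma poly_if0: "poly (if c then q else 0) x = (if c then poly q x else 0)" by simp
lemma of_nat_if1: "(of_nat (if c then 1 else 0) :: 'a::semiring_1) = (if c then 1 else 0)" by simp
lemma of_nat_if0: "(of_nat (if c then a else 0) :: 'a::semiring_1) = (if c then of_nat a else 0)" by simp
lemma ifif0: "(if A then (if B then x else 0) else 0) = (if A \<and> B then x else (0::'a::zero))" by simp
lemma coeff_if0: "coeff (if c then q else 0) i = (if c then coeff q i else 0)" by simp

locale proto =
  fixes n p V1 V2 :: nat
  assumes V1: "1 \<le> V1" "V1 \<le> n" and V2: "1 \<le> V2" "V2 \<le> n"
begin

definition KK1 where "KK1 = (n + V1 - 1) div V1"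
definition KK2 where "KK2 = (n + V2 - 1) div V2"
definition EE where "EE = KK1 * KK2 - 1"
definition JJ where "JJ = {..<V1} \<times> {..<V2}"
definition ex :: "nat \<Rightarrow> nat \<Rightarrow> nat" where "ex b c = (b div V1) * KK2 + c div V2"
definition col :: "nat \<Rightarrow> nat \<Rightarrow> nat \<times> nat" where "col b c = (b mod V1, c mod V2)"

definition flushB :: "(nat \<Rightarrow> nat) \<Rightarrow> (nat \<Rightarrow> nat) \<Rightarrow> (nat \<times> nat \<Rightarrow> nat) \<Rightarrow> (nat \<times> nat \<Rightarrow> nat)" where
  "flushB P Q be = (\<lambda>j. if j \<in> JJ then (be j + P (fst j) * Q (snd j)) mod p else 0)"

fun istep :: "nat \<Rightarrow> istate \<Rightarrow> nat \<times> nat \<Rightarrow> istate" where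
  "istep r (cv, P, Q, al, be, bd) (x, w) =
    (if x < n \<and> w < n then
       (if cv = Some x then
          (Some x, P(w mod V1 := (P (w mod V1) + r ^ ((w div V1) * KK2)) mod p),
                   Q(w mod V2 := (Q (w mod V2) + r ^ (w div V2)) mod p),
                   al(col x w := (al (col x w) + r ^ (EE - ex x w)) mod p), be, bd)
        else
          (Some x, (\<lambda>_. 0)(w mod V1 := r ^ ((w div V1) * KK2) mod p),
                   (\<lambda>_. 0)(w mod V2 := r ^ (w div V2) mod p),
                   al(col x w := (al (col x w) + r ^ (EE - ex x w)) mod p), flushB P Q be, bd))
     else (cv, P, Q, al, be, True))"

definition cPl :: "nat \<Rightarrow> nat list \<Rightarrow> nat \<Rightarrow> nat" where
  "cPl r l i = sum_list (map (\<lambda>b. if b mod V1 = i then r ^ ((b div V1) * KK2) else 0) l)"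
definition cQl :: "nat \<Rightarrow> nat list \<Rightarrow> nat \<Rightarrow> nat" where
  "cQl r l i = sum_list (map (\<lambda>c. if c mod V2 = i then r ^ (c div V2) else 0) l)"
definition cAl :: "nat \<Rightarrow> nat \<Rightarrow> nat list \<Rightarrow> nat \<times> nat \<Rightarrow> nat" where
  "cAl r x l j = sum_list (map (\<lambda>w. if col x w = j then r ^ (EE - ex x w) else 0) l)"

lemma inner_block:
  assumes "x < n" "\<forall>w\<in>set l. w < n"
  shows "\<exists>P' Q' al'. foldl (istep r) (Some x, P, Q, al, be, bd) (map (Pair x) l) = (Some x, P', Q', al', be, bd)
     \<and> (\<forall>i. P' i mod p = (P i + cPl r l i) mod p)
     \<and> (\<forall>i. Q' i mod p = (Q i + cQl r l i) mod p)
     \<and> (\<forall>j. al' j mod p = (al j + cAl r x l j) mod p)"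
  using assms(2)
proof (induction l arbitrary: P Q al)
  case Nil
  then show ?case by (auto simp: cPl_def cQl_def cAl_def)
next
  case (Cons w l)
  have wn: "w < n" using Cons.prems by simp
  define P1 where "P1 = P(w mod V1 := (P (w mod V1) + r ^ ((w div V1) * KK2)) mod p)"
  define Q1 where "Q1 = Q(w mod V2 := (Q (w mod V2) + r ^ (w div V2)) mod p)"
  define al1 where "al1 = al(col x w := (al (col x w) + r ^ (EE - ex x w)) mod p)"
  have st: "istep r (Some x, P, Q, al, be, bd) (x, w) = (Some x, P1, Q1, al1, be, bd)"
    using assms(1) wn by (simp add: P1_def Q1_def al1_def)
  obtain P' Q' al' where
    f: "foldl (istep r) (Some x, P1, Q1, al1, be, bd) (map (Pair x) l) = (Some x, P', Q', al', be, bd)"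
    and hP: "\<forall>i. P' i mod p = (P1 i + cPl r l i) mod p"
    and hQ: "\<forall>i. Q' i mod p = (Q1 i + cQl r l i) mod p"
    and hA: "\<forall>j. al' j mod p = (al1 j + cAl r x l j) mod p"
    using Cons.IH[of P1 Q1 al1] Cons.prems by auto
  have "foldl (istep r) (Some x, P, Q, al, be, bd) (map (Pair x) (w # l)) = (Some x, P', Q', al', be, bd)"
    using st f by simp
  moreover have "\<forall>i. P' i mod p = (P i + cPl r (w # l) i) mod p"
  proof
    fix i
    have "P' i mod p = (P1 i + cPl r l i) mod p" using hP by simp
    also have "\<dots> = (P i + cPl r (w # l) i) mod p"
      unfolding P1_def cPl_def by (auto simp: mod_add_left_eq add.assoc)
    finally show "P' i mod p = (P i + cPl r (w # l) i) mod p" .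
  qed
  moreover have "\<forall>i. Q' i mod p = (Q i + cQl r (w # l) i) mod p"
  proof
    fix i
    have "Q' i mod p = (Q1 i + cQl r l i) mod p" using hQ by simp
    also have "\<dots> = (Q i + cQl r (w # l) i) mod p"
      unfolding Q1_def cQl_def by (auto simp: mod_add_left_eq add.assoc)
    finally show "Q' i mod p = (Q i + cQl r (w # l) i) mod p" .
  qed
  moreover have "\<forall>j. al' j mod p = (al j + cAl r x (w # l) j) mod p"
  proof
    fix j
    have "al' j mod p = (al1 j + cAl r x l j) mod p" using hA by blast
    also have "\<dots> = (al j + cAl r x (w # l) j) mod p"
      unfolding al1_def cAl_def by (auto simp: mod_add_left_eq add.assoc)
    finally show "al' j mod p = (al j + cAl r x (w # l) j) mod p" .
  qed
  ultimately show ?case by blast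
qed

definition FV :: "istate \<Rightarrow> nat \<times> nat \<Rightarrow> nat" where
  "FV s = (case s of (cv, P, Q, al, be, bd) \<Rightarrow> (\<lambda>j. (be j + P (fst j) * Q (snd j)) mod p))"

lemma new_block:
  assumes "x < n" "\<forall>w\<in>set l. w < n" "l \<noteq> []" "cv \<noteq> Some x"
  shows "\<exists>P' Q' al' be'. foldl (istep r) (cv, P, Q, al, be, bd) (map (Pair x) l) = (Some x, P', Q', al', be', bd)
     \<and> (\<forall>j\<in>JJ. FV (Some x, P', Q', al', be', bd) j = (FV (cv, P, Q, al, be, bd) j + cPl r l (fst j) * cQl r l (snd j)) mod p)
     \<and> (\<forall>j. al' j mod p = (al j + cAl r x l j) mod p)"
proof -
  obtain w l' where l: "l = w # l'" using assms(3) by (cases l) auto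
  have wn: "w < n" "\<forall>w\<in>set l'. w < n" using assms(2) l by auto
  define P1 where "P1 = (\<lambda>_. 0 :: nat)(w mod V1 := r ^ ((w div V1) * KK2) mod p)"
  define Q1 where "Q1 = (\<lambda>_. 0 :: nat)(w mod V2 := r ^ (w div V2) mod p)"
  define al1 where "al1 = al(col x w := (al (col x w) + r ^ (EE - ex x w)) mod p)"
  define be1 where "be1 = flushB P Q be"
  have st: "istep r (cv, P, Q, al, be, bd) (x, w) = (Some x, P1, Q1, al1, be1, bd)"
    using assms(1,4) wn by (simp add: P1_def Q1_def al1_def be1_def)
  obtain P' Q' al' where
    f: "foldl (istep r) (Some x, P1, Q1, al1, be1, bd) (map (Pair x) l') = (Some x, P', Q', al', be1, bd)"
    and hP: "\<forall>i. P' i mod p = (P1 i + cPl r l' i) mod p"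
    and hQ: "\<forall>i. Q' i mod p = (Q1 i + cQl r l' i) mod p"
    and hA: "\<forall>j. al' j mod p = (al1 j + cAl r x l' j) mod p"
    using inner_block[OF assms(1) wn(2), of r P1 Q1 al1 be1 bd] by auto
  have fold: "foldl (istep r) (cv, P, Q, al, be, bd) (map (Pair x) l) = (Some x, P', Q', al', be1, bd)"
    using st f l by simp
  have P'e: "P' i mod p = cPl r l i mod p" for i
  proof -
    have "P' i mod p = (P1 i + cPl r l' i) mod p" using hP by simp
    also have "\<dots> = cPl r l i mod p"
      unfolding P1_def cPl_def l by (auto simp: mod_add_left_eq)
    finally show ?thesis .
  qed
  have Q'e: "Q' i mod p = cQl r l i mod p" for i
  proof -
    have "Q' i mod p = (Q1 i + cQl r l' i) mod p" using hQ by simp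
    also have "\<dots> = cQl r l i mod p"
      unfolding Q1_def cQl_def l by (auto simp: mod_add_left_eq)
    finally show ?thesis .
  qed
  have A'e: "al' j mod p = (al j + cAl r x l j) mod p" for j
  proof -
    have "al' j mod p = (al1 j + cAl r x l' j) mod p" using hA by blast
    also have "\<dots> = (al j + cAl r x l j) mod p"
      unfolding al1_def cAl_def l by (auto simp: mod_add_left_eq add.assoc)
    finally show ?thesis .
  qed
  have FVe: "FV (Some x, P', Q', al', be1, bd) j = (FV (cv, P, Q, al, be, bd) j + cPl r l (fst j) * cQl r l (snd j)) mod p"
    if j: "j \<in> JJ" for j
  proof -
    have "FV (Some x, P', Q', al', be1, bd) j = (be1 j + P' (fst j) * Q' (snd j)) mod p"
      unfolding FV_def by simp
    also have "\<dots> = (be1 j + (P' (fst j) mod p) * (Q' (snd j) mod p)) mod p"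
      by (metis mod_add_right_eq mod_mult_eq)
    also have "\<dots> = (be1 j + (cPl r l (fst j) mod p) * (cQl r l (snd j) mod p)) mod p"
      using P'e Q'e by simp
    also have "\<dots> = (be1 j + cPl r l (fst j) * cQl r l (snd j)) mod p"
      by (metis mod_add_right_eq mod_mult_eq)
    also have "\<dots> = ((be j + P (fst j) * Q (snd j)) mod p + cPl r l (fst j) * cQl r l (snd j)) mod p"
      unfolding be1_def flushB_def using j by simp
    also have "\<dots> = (FV (cv, P, Q, al, be, bd) j + cPl r l (fst j) * cQl r l (snd j)) mod p"
      unfolding FV_def by simp
    finally show ?thesis .
  qed
  show ?thesis using fold FVe A'e by blast
qed

lemma blocks:
  assumes "length vs = length ls" "distinct vs" "\<forall>v\<in>set vs. v < n" "\<forall>l\<in>set ls. \<forall>w\<in>set l. w < n"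
    "cv \<notin> Some ` set vs"
  shows "\<exists>cv' P' Q' al' be'. foldl (istep r) (cv, P, Q, al, be, bd) (concat (map2 (\<lambda>v l. map (Pair v) l) vs ls))
        = (cv', P', Q', al', be', bd)
     \<and> (\<forall>j\<in>JJ. FV (cv', P', Q', al', be', bd) j = (FV (cv, P, Q, al, be, bd) j
            + sum_list (map (\<lambda>(v, l). cPl r l (fst j) * cQl r l (snd j)) (zip vs ls))) mod p)
     \<and> (\<forall>j. al' j mod p = (al j + sum_list (map (\<lambda>(v, l). cAl r v l j) (zip vs ls))) mod p)"
  using assms
proof (induction vs arbitrary: ls cv P Q al be)
  case Nil
  then show ?case by (auto simp: FV_def)
next
  case (Cons v vs)
  obtain l ls' where ls: "ls = l # ls'" using Cons.prems(1) by (cases ls) auto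
  have len: "length vs = length ls'" using Cons.prems(1) ls by simp
  have dv: "distinct vs" "v \<notin> set vs" using Cons.prems(2) by auto
  have vn: "v < n" "\<forall>v\<in>set vs. v < n" using Cons.prems(3) by auto
  have ln: "\<forall>w\<in>set l. w < n" "\<forall>l\<in>set ls'. \<forall>w\<in>set l. w < n" using Cons.prems(4) ls by auto
  have cvv: "cv \<noteq> Some v" "cv \<notin> Some ` set vs" using Cons.prems(5) by auto
  have cat: "concat (map2 (\<lambda>v l. map (Pair v) l) (v # vs) ls) = map (Pair v) l @ concat (map2 (\<lambda>v l. map (Pair v) l) vs ls')"
    unfolding ls by simp
  show ?case
  proof (cases "l = []")
    case True
    obtain cv' P' Q' al' be' where
      f: "foldl (istep r) (cv, P, Q, al, be, bd) (concat (map2 (\<lambda>v l. map (Pair v) l) vs ls')) = (cv', P', Q', al', be', bd)"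
      and h1: "\<forall>j\<in>JJ. FV (cv', P', Q', al', be', bd) j = (FV (cv, P, Q, al, be, bd) j
            + sum_list (map (\<lambda>(v, l). cPl r l (fst j) * cQl r l (snd j)) (zip vs ls'))) mod p"
      and h2: "\<forall>j. al' j mod p = (al j + sum_list (map (\<lambda>(v, l). cAl r v l j) (zip vs ls'))) mod p"
      using Cons.IH[OF len dv(1) vn(2) ln(2) cvv(2)] by blast
    show ?thesis
      apply (rule exI[of _ cv'], rule exI[of _ P'], rule exI[of _ Q'], rule exI[of _ al'], rule exI[of _ be'])
      using f h1 h2 True unfolding cat ls by (simp add: cPl_def cQl_def cAl_def)
  next
    case False
    obtain P1 Q1 al1 be1 where
      f1: "foldl (istep r) (cv, P, Q, al, be, bd) (map (Pair v) l) = (Some v, P1, Q1, al1, be1, bd)"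
      and g1: "\<forall>j\<in>JJ. FV (Some v, P1, Q1, al1, be1, bd) j = (FV (cv, P, Q, al, be, bd) j + cPl r l (fst j) * cQl r l (snd j)) mod p"
      and g2: "\<forall>j. al1 j mod p = (al j + cAl r v l j) mod p"
      using new_block[OF vn(1) ln(1) False cvv(1), of r P Q al be bd] by blast
    have sv: "Some v \<notin> Some ` set vs" using dv(2) by auto
    obtain cv' P' Q' al' be' where
      f: "foldl (istep r) (Some v, P1, Q1, al1, be1, bd) (concat (map2 (\<lambda>v l. map (Pair v) l) vs ls')) = (cv', P', Q', al', be', bd)"
      and h1: "\<forall>j\<in>JJ. FV (cv', P', Q', al', be', bd) j = (FV (Some v, P1, Q1, al1, be1, bd) j
            + sum_list (map (\<lambda>(v, l). cPl r l (fst j) * cQl r l (snd j)) (zip vs ls'))) mod p"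
      and h2: "\<forall>j. al' j mod p = (al1 j + sum_list (map (\<lambda>(v, l). cAl r v l j) (zip vs ls'))) mod p"
      using Cons.IH[OF len dv(1) vn(2) ln(2) sv] by blast
    have F: "foldl (istep r) (cv, P, Q, al, be, bd) (concat (map2 (\<lambda>v l. map (Pair v) l) (v # vs) ls)) = (cv', P', Q', al', be', bd)"
      unfolding cat using f1 f by simp
    have H1: "\<forall>j\<in>JJ. FV (cv', P', Q', al', be', bd) j = (FV (cv, P, Q, al, be, bd) j
            + sum_list (map (\<lambda>(v, l). cPl r l (fst j) * cQl r l (snd j)) (zip (v # vs) ls))) mod p"
    proof
      fix j assume j: "j \<in> JJ"
      have "FV (cv', P', Q', al', be', bd) j = (FV (Some v, P1, Q1, al1, be1, bd) j
            + sum_list (map (\<lambda>(v, l). cPl r l (fst j) * cQl r l (snd j)) (zip vs ls'))) mod p"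
        using h1 j by blast
      also have "\<dots> = ((FV (cv, P, Q, al, be, bd) j + cPl r l (fst j) * cQl r l (snd j)) mod p
            + sum_list (map (\<lambda>(v, l). cPl r l (fst j) * cQl r l (snd j)) (zip vs ls'))) mod p"
        using g1 j by simp
      also have "\<dots> = (FV (cv, P, Q, al, be, bd) j
            + sum_list (map (\<lambda>(v, l). cPl r l (fst j) * cQl r l (snd j)) (zip (v # vs) ls))) mod p"
        unfolding ls by (simp add: mod_add_left_eq add.assoc)
      finally show "FV (cv', P', Q', al', be', bd) j = (FV (cv, P, Q, al, be, bd) j
            + sum_list (map (\<lambda>(v, l). cPl r l (fst j) * cQl r l (snd j)) (zip (v # vs) ls))) mod p" .
    qed
    have H2: "\<forall>j. al' j mod p = (al j + sum_list (map (\<lambda>(v, l). cAl r v l j) (zip (v # vs) ls))) mod p"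
    proof
      fix j
      have "al' j mod p = (al1 j + sum_list (map (\<lambda>(v, l). cAl r v l j) (zip vs ls'))) mod p"
        using h2 by blast
      also have "\<dots> = (al1 j mod p + sum_list (map (\<lambda>(v, l). cAl r v l j) (zip vs ls'))) mod p"
        by (simp add: mod_add_left_eq)
      also have "\<dots> = ((al j + cAl r v l j) mod p + sum_list (map (\<lambda>(v, l). cAl r v l j) (zip vs ls'))) mod p"
        using g2[rule_format, of j] by simp
      also have "\<dots> = (al j + sum_list (map (\<lambda>(v, l). cAl r v l j) (zip (v # vs) ls))) mod p"
        unfolding ls by (simp add: mod_add_left_eq add.assoc)
      finally show "al' j mod p = (al j + sum_list (map (\<lambda>(v, l). cAl r v l j) (zip (v # vs) ls))) mod p" .
    qed
    show ?thesis using F H1 H2 by blast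
  qed
qed

definition Nb :: "(nat \<Rightarrow> nat \<Rightarrow> bool) \<Rightarrow> nat \<Rightarrow> nat set" where
  "Nb E x = {w. w < n \<and> E x w}"
definition PX where
  "PX E r x i = (\<Sum>b\<in>Nb E x. if b mod V1 = i then r ^ ((b div V1) * KK2) else 0)"
definition QX where
  "QX E r x i = (\<Sum>c\<in>Nb E x. if c mod V2 = i then r ^ (c div V2) else 0)"
definition AXv where
  "AXv E r x j = (\<Sum>w\<in>Nb E x. if col x w = j then r ^ (EE - ex x w) else (0::nat))"
definition AX where "AX E r j = (\<Sum>x<n. AXv E r x j)"
definition BX where "BX E r j = (\<Sum>x<n. PX E r x (fst j) * QX E r x (snd j))"

definition chkf :: "istate \<Rightarrow> nat" where
  "chkf s = (case s of (cv, P, Q, al, be, bd) \<Rightarrow> (\<Sum>j\<in>JJ. al j * FV s j) mod p)"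

definition is0 :: istate where "is0 = (None, \<lambda>_. 0, \<lambda>_. 0, \<lambda>_. 0, \<lambda>_. 0, False)"

lemma finite_Nb [simp]: "finite (Nb E x)" unfolding Nb_def by simp

lemma list_sum_zip:
  assumes "length vs = length ls" "distinct vs" "set vs = {..<n}"
    "\<And>i. i < length vs \<Longrightarrow> f (vs ! i) (ls ! i) = g (vs ! i)"
  shows "sum_list (map (\<lambda>(v, l). f v l) (zip vs ls)) = (\<Sum>x<n. g x)"
proof -
  have "map (\<lambda>(v, l). f v l) (zip vs ls) = map (\<lambda>(v, l). g v) (zip vs ls)"
  proof (rule map_cong[OF refl])
    fix t assume "t \<in> set (zip vs ls)"
    then obtain i where "i < length vs" "i < length ls" "vs ! i = fst t" "ls ! i = snd t"
      by (auto simp: in_set_zip)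
    thus "(case t of (v, l) \<Rightarrow> f v l) = (case t of (v, l) \<Rightarrow> g v)"
      using assms(4) by (cases t) auto
  qed
  also have "map (\<lambda>(v, l). g v) (zip vs ls) = map g vs"
    using assms(1) by (induction vs ls rule: list_induct2) auto
  finally have "sum_list (map (\<lambda>(v, l). f v l) (zip vs ls)) = sum_list (map g vs)" by simp
  also have "\<dots> = sum g (set vs)" using assms(2) by (rule sum_list_distinct_conv_sum_set)
  finally show ?thesis using assms(3) by simp
qed

lemma valid_input:
  assumes g: "simple_graph n E" and a: "adj_stream n E \<sigma>"
  shows "\<exists>cv' P' Q' al' be'. foldl (istep r) is0 \<sigma> = (cv', P', Q', al', be', False)
     \<and> (\<forall>j\<in>JJ. FV (cv', P', Q', al', be', False) j = BX E r j mod p)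
     \<and> (\<forall>j. al' j mod p = AX E r j mod p)"
proof -
  obtain vs ls where vs: "distinct vs" "set vs = {..<n}" "length ls = length vs"
    and ls: "\<forall>i < length vs. distinct (ls ! i) \<and> set (ls ! i) = {w. E (vs ! i) w}"
    and sig: "\<sigma> = concat (map2 (\<lambda>v l. map (Pair v) l) vs ls)"
    using a unfolding adj_stream_def by blast
  have Ebd: "\<And>u w. E u w \<Longrightarrow> u < n \<and> w < n" using g unfolding simple_graph_def by blast
  have setl: "set (ls ! i) = Nb E (vs ! i)" if "i < length vs" for i
    using ls that Ebd unfolding Nb_def by auto
  have lsn: "\<forall>l\<in>set ls. \<forall>w\<in>set l. w < n"
  proof (intro ballI)
    fix l w assume "l \<in> set ls" "w \<in> set l"
    then obtain i where "i < length ls" "l = ls ! i" by (auto simp: in_set_conv_nth)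
    thus "w < n" using setl[of i] vs(3) \<open>w \<in> set l\<close> unfolding Nb_def by auto
  qed
  obtain cv' P' Q' al' be' where
    f: "foldl (istep r) is0 \<sigma> = (cv', P', Q', al', be', False)"
    and h1: "\<forall>j\<in>JJ. FV (cv', P', Q', al', be', False) j = (FV is0 j
            + sum_list (map (\<lambda>(v, l). cPl r l (fst j) * cQl r l (snd j)) (zip vs ls))) mod p"
    and h2: "\<forall>j. al' j mod p = ((0::nat) + sum_list (map (\<lambda>(v, l). cAl r v l j) (zip vs ls))) mod p"
    using blocks[of vs ls None r "\<lambda>_. 0" "\<lambda>_. 0" "\<lambda>_. 0" "\<lambda>_. 0" False] vs(1,2) vs(3)[symmetric] lsn
    unfolding sig is0_def by auto
  have cP: "cPl r (ls ! i) k = PX E r (vs ! i) k" if "i < length vs" for i k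
    unfolding cPl_def PX_def using sum_list_distinct_conv_sum_set[of "ls ! i"] ls that setl by simp
  have cQ: "cQl r (ls ! i) k = QX E r (vs ! i) k" if "i < length vs" for i k
    unfolding cQl_def QX_def using sum_list_distinct_conv_sum_set[of "ls ! i"] ls that setl by simp
  have cA: "cAl r (vs ! i) (ls ! i) j = AXv E r (vs ! i) j" if "i < length vs" for i j
    unfolding cAl_def AXv_def using sum_list_distinct_conv_sum_set[of "ls ! i"] ls that setl by simp
  have sB: "sum_list (map (\<lambda>(v, l). cPl r l (fst j) * cQl r l (snd j)) (zip vs ls)) = BX E r j" for j
    unfolding BX_def by (rule list_sum_zip) (use vs cP cQ in auto)
  have sA: "sum_list (map (\<lambda>(v, l). cAl r v l j) (zip vs ls)) = AX E r j" for j
    unfolding AX_def by (rule list_sum_zip) (use vs cA in auto)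
  have FV0: "FV is0 j = 0" for j unfolding FV_def is0_def by simp
  show ?thesis using f h1 h2 sA sB FV0 by auto
qed

lemma valid_chk:
  assumes g: "simple_graph n E" and a: "adj_stream n E \<sigma>"
  shows "chkf (foldl (istep r) is0 \<sigma>) = (\<Sum>j\<in>JJ. AX E r j * BX E r j) mod p"
    and "snd (snd (snd (snd (snd (foldl (istep r) is0 \<sigma>))))) = False"
proof -
  obtain cv' P' Q' al' be' where
    f: "foldl (istep r) is0 \<sigma> = (cv', P', Q', al', be', False)"
    and h1: "\<forall>j\<in>JJ. FV (cv', P', Q', al', be', False) j = BX E r j mod p"
    and h2: "\<forall>j. al' j mod p = AX E r j mod p"
    using valid_input[OF g a, of r] by blast
  have "chkf (foldl (istep r) is0 \<sigma>) = (\<Sum>j\<in>JJ. al' j * FV (cv', P', Q', al', be', False) j) mod p"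
    unfolding f chkf_def by simp
  also have "\<dots> = (\<Sum>j\<in>JJ. (al' j * FV (cv', P', Q', al', be', False) j) mod p) mod p"
    by (simp add: mod_sum_eq)
  also have "\<dots> = (\<Sum>j\<in>JJ. ((al' j mod p) * (FV (cv', P', Q', al', be', False) j mod p)) mod p) mod p"
    by (simp add: mod_mult_eq)
  also have "\<dots> = (\<Sum>j\<in>JJ. ((AX E r j mod p) * (BX E r j mod p)) mod p) mod p"
    by (rule arg_cong[where f="\<lambda>x. x mod p"], rule sum.cong[OF refl]) (use h1 h2[rule_format] in simp)
  also have "\<dots> = (\<Sum>j\<in>JJ. AX E r j * BX E r j) mod p"
    by (simp add: mod_sum_eq mod_mult_eq)
  finally show "chkf (foldl (istep r) is0 \<sigma>) = (\<Sum>j\<in>JJ. AX E r j * BX E r j) mod p" .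
  show "snd (snd (snd (snd (snd (foldl (istep r) is0 \<sigma>))))) = False" using f by simp
qed



lemma finite_JJ [simp]: "finite JJ" unfolding JJ_def by simp

lemma col_JJ: "col x w \<in> JJ"
  unfolding col_def JJ_def using V1 V2 by auto

definition Gval :: "(nat \<Rightarrow> nat \<Rightarrow> bool) \<Rightarrow> nat \<Rightarrow> nat" where
  "Gval E r = (\<Sum>x<n. \<Sum>w\<in>Nb E x. \<Sum>y<n. \<Sum>b\<in>Nb E y. \<Sum>c\<in>Nb E y.
      if b mod V1 = x mod V1 \<and> c mod V2 = w mod V2 then r ^ (EE - ex x w + ex b c) else 0)"

definition GG :: "(nat \<Rightarrow> nat \<Rightarrow> bool) \<Rightarrow> int poly" where
  "GG E = (\<Sum>x<n. \<Sum>w\<in>Nb E x. \<Sum>y<n. \<Sum>b\<in>Nb E y. \<Sum>c\<in>Nb E y.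
      if b mod V1 = x mod V1 \<and> c mod V2 = w mod V2 then monom 1 (EE - ex x w + ex b c) else 0)"

lemma poly_GG: "poly (GG E) (int r) = int (Gval E r)"
  unfolding GG_def Gval_def by (simp add: poly_sum poly_monom of_nat_sum poly_if0 of_nat_if0 cong: if_cong)

lemma Gval_eq: "Gval E r = (\<Sum>j\<in>JJ. AX E r j * BX E r j)"
proof -
  have "(\<Sum>j\<in>JJ. AX E r j * BX E r j)
      = (\<Sum>j\<in>JJ. \<Sum>x<n. \<Sum>w\<in>Nb E x. if col x w = j then r ^ (EE - ex x w) * BX E r j else 0)"
    unfolding AX_def AXv_def by (simp add: sum_distrib_right if0_mult cong: if_cong)
  also have "\<dots> = (\<Sum>x<n. \<Sum>j\<in>JJ. \<Sum>w\<in>Nb E x. if col x w = j then r ^ (EE - ex x w) * BX E r j else 0)"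
    by (rule sum.swap)
  also have "\<dots> = (\<Sum>x<n. \<Sum>w\<in>Nb E x. \<Sum>j\<in>JJ. if col x w = j then r ^ (EE - ex x w) * BX E r j else 0)"
    by (rule sum.cong[OF refl], rule sum.swap)
  also have "\<dots> = (\<Sum>x<n. \<Sum>w\<in>Nb E x. r ^ (EE - ex x w) * BX E r (col x w))"
    by (rule sum.cong[OF refl], rule sum.cong[OF refl]) (simp add: col_JJ sum.delta sum.delta')
  also have "\<dots> = Gval E r"
    unfolding Gval_def BX_def PX_def QX_def col_def ex_def
    by (simp add: sum_distrib_left sum_distrib_right sum_product power_add if0_mult mult_if0 mult_ac ifif0 cong: if_cong)
  finally show ?thesis by simp
qed


lemma coeff_GG: "coeff (GG E) i = (\<Sum>x<n. \<Sum>w\<in>Nb E x. \<Sum>y<n. \<Sum>b\<in>Nb E y. \<Sum>c\<in>Nb E y.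
      if b mod V1 = x mod V1 \<and> c mod V2 = w mod V2 \<and> EE - ex x w + ex b c = i then 1 else 0)"
  unfolding GG_def by (simp add: coeff_sum coeff_monom coeff_if0 ifif0 conj_commute cong: if_cong)

lemma div_lt_K:
  assumes "x < n" "V \<ge> 1"
  shows "x div V < (n + V - 1) div V"
proof -
  have "x div V \<le> (n - 1) div V" using assms by (intro div_le_mono) simp
  moreover have "(n + V - 1) div V = (n - 1) div V + 1"
  proof -
    have h: "n + V - 1 = (n - 1) + V" using assms by simp
    have "((n - 1) + V) div V = (n - 1) div V + 1" using assms by (subst div_add_self2) auto
    thus ?thesis unfolding h .
  qed
  ultimately show ?thesis by simp
qed

lemma ex_le: assumes "x < n" "w < n" shows "ex x w \<le> EE"
proof -
  have a: "x div V1 < KK1" unfolding KK1_def using div_lt_K[OF assms(1)] V1 by simp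
  have b: "w div V2 < KK2" unfolding KK2_def using div_lt_K[OF assms(2)] V2 by simp
  have "(x div V1) * KK2 + w div V2 < (x div V1) * KK2 + KK2" using b by simp
  also have "\<dots> = (x div V1 + 1) * KK2" by simp
  also have "\<dots> \<le> KK1 * KK2" using a by (intro mult_right_mono) simp_all
  finally show ?thesis unfolding ex_def EE_def by simp
qed

lemma ex_inj:
  assumes "b < n" "c < n" "x < n" "w < n" "b mod V1 = x mod V1" "c mod V2 = w mod V2" "ex b c = ex x w"
  shows "b = x \<and> c = w"
proof -
  have c2: "c div V2 < KK2" "w div V2 < KK2"
    unfolding KK2_def using div_lt_K assms(2,4) V2 by auto
  have e: "(b div V1) * KK2 + c div V2 = (x div V1) * KK2 + w div V2" using assms(7) unfolding ex_def .
  have "((b div V1) * KK2 + c div V2) div KK2 = b div V1" using c2 by simp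
  moreover have "((x div V1) * KK2 + w div V2) div KK2 = x div V1" using c2 by simp
  ultimately have d1: "b div V1 = x div V1" using e by simp
  with e have d2: "c div V2 = w div V2" by simp
  have "b = (b div V1) * V1 + b mod V1" by simp
  also have "\<dots> = x" using d1 assms(5) by simp
  finally have "b = x" .
  moreover have "c = (c div V2) * V2 + c mod V2" by simp
  hence "c = w" using d2 assms(6) by simp
  ultimately show ?thesis by simp
qed

lemma degree_GG: "degree (GG E) \<le> 2 * EE"
proof (rule degree_le, intro allI impI)
  fix i assume i: "2 * EE < i"
  show "coeff (GG E) i = 0"
    unfolding coeff_GG
  proof (intro sum.neutral ballI)
    fix x w y b c assume "x \<in> {..<n}" "w \<in> Nb E x" "y \<in> {..<n}" "b \<in> Nb E y" "c \<in> Nb E y"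
    hence "b < n" "c < n" unfolding Nb_def by auto
    hence "ex b c \<le> EE" by (rule ex_le)
    hence "EE - ex x w + ex b c \<noteq> i" using i by simp
    thus "(if b mod V1 = x mod V1 \<and> c mod V2 = w mod V2 \<and> EE - ex x w + ex b c = i then 1 else 0) = (0::int)"
      by simp
  qed
qed

lemma card_triples:
  "card {(a, b, c). a < n \<and> b < n \<and> c < n \<and> P a b c}
     = (\<Sum>a<n. \<Sum>b<n. \<Sum>c<n. if P a b c then 1 else 0)"
proof -
  have "{(a, b, c). a < n \<and> b < n \<and> c < n \<and> P a b c} = Sigma {..<n} (\<lambda>a. Sigma {..<n} (\<lambda>b. {c. c < n \<and> P a b c}))"
    by auto
  hence "card {(a, b, c). a < n \<and> b < n \<and> c < n \<and> P a b c} = (\<Sum>a<n. \<Sum>b<n. card {c. c < n \<and> P a b c})"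
    by (simp add: card_SigmaI)
  also have "\<dots> = (\<Sum>a<n. \<Sum>b<n. \<Sum>c<n. if P a b c then 1 else 0)"
  proof (intro sum.cong refl)
    fix a b
    have "{c. c < n \<and> P a b c} = {c \<in> {..<n}. P a b c}" by auto
    thus "card {c. c < n \<and> P a b c} = (\<Sum>c<n. if P a b c then 1 else 0)"
      using sum.inter_filter[of "{..<n}" "\<lambda>_. 1::nat" "P a b"] by simp
  qed
  finally show ?thesis .
qed

lemma coeff_GG_EE:
  assumes g: "simple_graph n E"
  shows "coeff (GG E) EE = int (card {(a, b, c). a < n \<and> b < n \<and> c < n \<and> E a b \<and> E b c \<and> E a c})"
proof -
  have step1: "(\<Sum>b\<in>Nb E y. \<Sum>c\<in>Nb E y.
      if b mod V1 = x mod V1 \<and> c mod V2 = w mod V2 \<and> EE - ex x w + ex b c = EE then 1 else 0)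
     = (if E y x \<and> E y w then 1 else (0::int))"
    if xw: "x < n" "w \<in> Nb E x" for x w y
  proof -
    have wn: "w < n" using xw unfolding Nb_def by simp
    have "(\<Sum>b\<in>Nb E y. \<Sum>c\<in>Nb E y.
      if b mod V1 = x mod V1 \<and> c mod V2 = w mod V2 \<and> EE - ex x w + ex b c = EE then 1 else 0)
      = (\<Sum>b\<in>Nb E y. \<Sum>c\<in>Nb E y. if b = x \<and> c = w then 1 else (0::int))"
    proof (intro sum.cong refl)
      fix b c assume bc: "b \<in> Nb E y" "c \<in> Nb E y"
      hence bn: "b < n" "c < n" unfolding Nb_def by auto
      have le: "ex x w \<le> EE" using ex_le[OF xw(1) wn] .
      have "(b mod V1 = x mod V1 \<and> c mod V2 = w mod V2 \<and> EE - ex x w + ex b c = EE) \<longleftrightarrow> (b = x \<and> c = w)"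
      proof
        assume h: "b mod V1 = x mod V1 \<and> c mod V2 = w mod V2 \<and> EE - ex x w + ex b c = EE"
        hence h3: "EE - ex x w + ex b c = EE" by blast
        hence "ex b c = ex x w" using le by linarith
        thus "b = x \<and> c = w" using ex_inj[OF bn xw(1) wn] h by blast
      next
        assume "b = x \<and> c = w"
        thus "b mod V1 = x mod V1 \<and> c mod V2 = w mod V2 \<and> EE - ex x w + ex b c = EE" using le by simp
      qed
      thus "(if b mod V1 = x mod V1 \<and> c mod V2 = w mod V2 \<and> EE - ex x w + ex b c = EE then 1 else 0)
          = (if b = x \<and> c = w then 1 else (0::int))" by simp
    qed
    also have "\<dots> = (\<Sum>b\<in>Nb E y. if b = x then (if w \<in> Nb E y then 1 else 0) else (0::int))"
      by (intro sum.cong refl) (simp add: sum.delta)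
    also have "\<dots> = (if x \<in> Nb E y \<and> w \<in> Nb E y then 1 else 0)"
      by (simp add: sum.delta)
    also have "\<dots> = (if E y x \<and> E y w then 1 else 0)"
      using xw wn unfolding Nb_def by auto
    finally show ?thesis .
  qed
  have "coeff (GG E) EE = (\<Sum>x<n. \<Sum>w\<in>Nb E x. \<Sum>y<n. if E y x \<and> E y w then 1 else (0::int))"
    unfolding coeff_GG by (intro sum.cong refl) (simp add: step1)
  also have "\<dots> = (\<Sum>x<n. \<Sum>w<n. \<Sum>y<n. if E y x \<and> E x w \<and> E y w then 1 else (0::int))"
  proof (rule sum.cong[OF refl])
    fix x
    have NB: "Nb E x = {w \<in> {..<n}. E x w}" unfolding Nb_def by auto
    have "(\<Sum>w\<in>Nb E x. \<Sum>y<n. if E y x \<and> E y w then 1 else (0::int))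
        = (\<Sum>w<n. if E x w then (\<Sum>y<n. if E y x \<and> E y w then 1 else (0::int)) else 0)"
      unfolding NB by (rule sum.inter_filter) simp
    also have "\<dots> = (\<Sum>w<n. \<Sum>y<n. if E y x \<and> E x w \<and> E y w then 1 else (0::int))"
      by (intro sum.cong refl) auto
    finally show "(\<Sum>w\<in>Nb E x. \<Sum>y<n. if E y x \<and> E y w then 1 else (0::int))
        = (\<Sum>w<n. \<Sum>y<n. if E y x \<and> E x w \<and> E y w then 1 else (0::int))" .
  qed
  also have "\<dots> = (\<Sum>x<n. \<Sum>y<n. \<Sum>w<n. if E y x \<and> E x w \<and> E y w then 1 else (0::int))"
    by (rule sum.cong[OF refl], rule sum.swap)
  also have "\<dots> = (\<Sum>y<n. \<Sum>x<n. \<Sum>w<n. if E y x \<and> E x w \<and> E y w then 1 else (0::int))"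
    by (rule sum.swap)
  also have "\<dots> = int (\<Sum>y<n. \<Sum>x<n. \<Sum>w<n. if E y x \<and> E x w \<and> E y w then 1 else 0)"
    by (simp only: of_nat_sum of_nat_if1)
  also have "\<dots> = int (card {(a, b, c). a < n \<and> b < n \<and> c < n \<and> E a b \<and> E b c \<and> E a c})"
    using card_triples[of "\<lambda>a b c. E a b \<and> E b c \<and> E a c"] by simp
  finally show ?thesis .
qed

end

lemma bits_sum:
  fixes x :: nat
  shows "(\<Sum>t<w. if bit x t then 2 ^ t else 0) = x mod 2 ^ w"
proof (induction w arbitrary: x)
  case 0
  then show ?case by simp
next
  case (Suc w)
  have "(\<Sum>t<Suc w. if bit x t then (2::nat) ^ t else 0)
      = (if bit x 0 then 1 else 0) + (\<Sum>t<w. if bit x (Suc t) then 2 ^ Suc t else 0)"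
    by (subst sum.lessThan_Suc_shift) simp
  also have "(\<Sum>t<w. if bit x (Suc t) then (2::nat) ^ Suc t else 0) = 2 * (\<Sum>t<w. if bit (x div 2) t then 2 ^ t else 0)"
    by (simp add: sum_distrib_left bit_Suc mult_if0, intro sum.cong refl, simp)
  also have "\<dots> = 2 * ((x div 2) mod 2 ^ w)" using Suc.IH by simp
  also have "(if bit x 0 then 1 else 0) + 2 * ((x div 2) mod 2 ^ w) = x mod 2 ^ Suc w"
    by (simp add: mod_mult2_eq bit_0 odd_iff_mod_2_eq_one)
  finally show ?case .
qed

lemma regroup_sum:
  fixes g :: "nat \<Rightarrow> nat \<Rightarrow> 'a::comm_monoid_add"
  assumes "k > 0"
  shows "(\<Sum>j<N * k. g (j div k) (j mod k)) = (\<Sum>i<N. \<Sum>t<k. g i t)"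
proof -
  have "(\<Sum>j<N * k. g (j div k) (j mod k)) = (\<Sum>i<N. \<Sum>j\<in>{i * k..<i * k + k}. g (j div k) (j mod k))"
    by (rule sum.nat_group[symmetric])
  also have "\<dots> = (\<Sum>i<N. \<Sum>t<k. g i t)"
  proof (rule sum.cong[OF refl])
    fix i
    have "(\<Sum>j\<in>{i * k..<i * k + k}. g (j div k) (j mod k)) = (\<Sum>t\<in>{0..<k}. g ((t + i * k) div k) ((t + i * k) mod k))"
      using sum.shift_bounds_nat_ivl[of "\<lambda>j. g (j div k) (j mod k)" 0 "i * k" k] by (simp add: add.commute)
    also have "\<dots> = (\<Sum>t<k. g i t)"
      using assms by (intro sum.cong) auto
    finally show "(\<Sum>j\<in>{i * k..<i * k + k}. g (j div k) (j mod k)) = (\<Sum>t<k. g i t)" .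
  qed
  finally show ?thesis .
qed

locale proto2 = proto +
  fixes wb :: nat
  assumes wb: "wb \<ge> 1" and pp: "prime p" and pbig: "6 * n ^ 3 < p" and pw: "p \<le> 2 ^ wb"
begin

definition NC where "NC = 2 * EE + 1"
definition NB where "NB = NC * wb"

fun hstep :: "nat \<Rightarrow> nat \<times> nat \<times> nat \<Rightarrow> bool \<Rightarrow> nat \<times> nat \<times> nat" where
  "hstep r (k, acc, ce) b =
     (if k < NB then
        (k + 1, (acc + (if b then 2 ^ (k mod wb) * r ^ (k div wb) else 0)) mod p,
         if k div wb = EE then (ce + (if b then 2 ^ (k mod wb) else 0)) mod p else ce)
      else (NB + 1, acc, ce))"

definition hsum where "hsum r m = (\<Sum>k<length m. if m ! k then 2 ^ (k mod wb) * r ^ (k div wb) else 0)"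
definition csum where "csum m = (\<Sum>k<length m. if m ! k \<and> k div wb = EE then 2 ^ (k mod wb) else 0)"

lemma help_run:
  "(length m \<le> NB \<longrightarrow> foldl (hstep r) (0, 0, 0) m = (length m, hsum r m mod p, csum m mod p))
   \<and> (NB < length m \<longrightarrow> fst (foldl (hstep r) (0, 0, 0) m) = NB + 1)"
proof (induction m rule: rev_induct)
  case Nil
  then show ?case by (simp add: hsum_def csum_def)
next
  case (snoc b m)
  show ?case
  proof (cases "length m < NB")
    case True
    hence f: "foldl (hstep r) (0, 0, 0) m = (length m, hsum r m mod p, csum m mod p)" using snoc by simp
    have hs: "hsum r (m @ [b]) = hsum r m + (if b then 2 ^ (length m mod wb) * r ^ (length m div wb) else 0)"
      unfolding hsum_def by (simp add: nth_append cong: if_cong)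
    have cs: "csum (m @ [b]) = csum m + (if b \<and> length m div wb = EE then 2 ^ (length m mod wb) else 0)"
      unfolding csum_def by (simp add: nth_append cong: if_cong)
    show ?thesis using True f
      by (simp add: hs cs mod_add_left_eq)
  next
    case False
    hence "fst (foldl (hstep r) (0, 0, 0) m) \<ge> NB"
      using snoc by (cases "length m = NB") auto
    moreover have "\<And>k a c b. NB \<le> k \<Longrightarrow> fst (hstep r (k, a, c) b) = NB + 1" by simp
    ultimately have "fst (foldl (hstep r) (0, 0, 0) (m @ [b])) = NB + 1"
      by (cases "foldl (hstep r) (0, 0, 0) m") simp
    thus ?thesis using False by simp
  qed
qed

definition cf :: "bool list \<Rightarrow> nat \<Rightarrow> nat" where
  "cf m i = (\<Sum>t<wb. if m ! (i * wb + t) then 2 ^ t else 0)"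

lemma hsum_full:
  assumes "length m = NB"
  shows "hsum r m = (\<Sum>i<NC. cf m i * r ^ i)"
proof -
  have "hsum r m = (\<Sum>k<NC * wb. (\<lambda>i t. if m ! (i * wb + t) then 2 ^ t * r ^ i else 0) (k div wb) (k mod wb))"
    unfolding hsum_def assms NB_def by (intro sum.cong refl) (simp add: mult.commute)
  also have "\<dots> = (\<Sum>i<NC. \<Sum>t<wb. if m ! (i * wb + t) then 2 ^ t * r ^ i else 0)"
    by (rule regroup_sum) (use wb in simp)
  also have "\<dots> = (\<Sum>i<NC. cf m i * r ^ i)"
    unfolding cf_def by (simp add: sum_distrib_right if0_mult)
  finally show ?thesis .
qed

lemma csum_full:
  assumes "length m = NB"
  shows "csum m = cf m EE"
proof -
  have "csum m = (\<Sum>k<NC * wb. (\<lambda>i t. if m ! (i * wb + t) \<and> i = EE then 2 ^ t else 0) (k div wb) (k mod wb))"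
    unfolding csum_def assms NB_def by (intro sum.cong refl) (simp add: mult.commute)
  also have "\<dots> = (\<Sum>i<NC. \<Sum>t<wb. if m ! (i * wb + t) \<and> i = EE then 2 ^ t else 0)"
    by (rule regroup_sum) (use wb in simp)
  also have "\<dots> = (\<Sum>i<NC. if i = EE then cf m i else 0)"
    unfolding cf_def by (intro sum.cong refl) auto
  also have "\<dots> = cf m EE" by (simp add: NC_def)
  finally show ?thesis .
qed

definition hmsg :: "(nat \<Rightarrow> nat) \<Rightarrow> bool list" where
  "hmsg cs = map (\<lambda>k. bit (cs (k div wb)) (k mod wb)) [0..<NB]"

lemma length_hmsg [simp]: "length (hmsg cs) = NB" unfolding hmsg_def by simp

lemma cf_hmsg:
  assumes "i < NC"
  shows "cf (hmsg cs) i = cs i mod 2 ^ wb"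
proof -
  have "cf (hmsg cs) i = (\<Sum>t<wb. if bit (cs i) t then 2 ^ t else 0)"
    unfolding cf_def
  proof (intro sum.cong refl)
    fix t assume t: "t \<in> {..<wb}"
    have "i * wb + t < NB"
    proof -
      have "i * wb + t < i * wb + wb" using t by simp
      also have "\<dots> = (i + 1) * wb" by simp
      also have "\<dots> \<le> NC * wb" using assms by (intro mult_right_mono) simp_all
      finally show ?thesis unfolding NB_def .
    qed
    moreover have "(i * wb + t) div wb = i" "(i * wb + t) mod wb = t" using t by auto
    ultimately show "(if hmsg cs ! (i * wb + t) then 2 ^ t else 0) = (if bit (cs i) t then 2 ^ t else (0::nat))"
      unfolding hmsg_def by simp
  qed
  also have "\<dots> = cs i mod 2 ^ wb" by (rule bits_sum)
  finally show ?thesis .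
qed

definition FS :: "'a set \<Rightarrow> ('a \<Rightarrow> nat) set" where
  "FS A = {f. \<forall>i. (i \<in> A \<longrightarrow> f i < p) \<and> (i \<notin> A \<longrightarrow> f i = 0)}"

lemma p_pos: "p > 0" using pp by (simp add: prime_gt_0_nat)

lemma FS_card:
  assumes "finite A"
  shows "finite (FS A) \<and> card (FS A) \<le> p ^ card A"
proof -
  define h where "h = (\<lambda>g i. if i \<in> A then g i else (0::nat))"
  have sub: "FS A \<subseteq> h ` (PiE A (\<lambda>_. {..<p}))"
  proof
    fix f assume f: "f \<in> FS A"
    have "restrict f A \<in> PiE A (\<lambda>_. {..<p})" using f unfolding FS_def by auto
    moreover have "h (restrict f A) = f" using f unfolding FS_def h_def by (auto simp: fun_eq_iff)
    ultimately show "f \<in> h ` (PiE A (\<lambda>_. {..<p}))" by (metis image_eqI)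
  qed
  have fin: "finite (PiE A (\<lambda>_. {..<p}))" using assms by (intro finite_PiE) auto
  have "card (FS A) \<le> card (h ` (PiE A (\<lambda>_. {..<p})))" using sub fin by (intro card_mono) auto
  also have "\<dots> \<le> card (PiE A (\<lambda>_. {..<p}))" by (rule card_image_le[OF fin])
  also have "\<dots> = p ^ card A" using assms by (simp add: card_PiE)
  finally show ?thesis using sub fin finite_subset by blast
qed

definition XI :: "istate set" where
  "XI = (insert None (Some ` {..<n})) \<times> FS {..<V1} \<times> FS {..<V2} \<times> FS JJ \<times> FS JJ \<times> UNIV"
definition XH :: "(nat \<times> nat \<times> nat) set" where
  "XH = {..NB + 1} \<times> {..<p} \<times> {..<p}"
definition XX :: "(nat \<times> istate \<times> (nat \<times> nat \<times> nat)) set" where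
  "XX = {..<p} \<times> XI \<times> XH"

lemma istep_XI: "s \<in> XI \<Longrightarrow> istep r s x \<in> XI"
proof -
  assume sX: "s \<in> XI"
  obtain cv P Q al be bd where s: "s = (cv, P, Q, al, be, bd)" by (cases s) auto
  obtain a w where x: "x = (a, w)" by (cases x) auto
  have V: "w mod V1 < V1" "w mod V2 < V2" using V1 V2 by auto
  have cJ: "col a w \<in> JJ" by (rule col_JJ)
  show ?thesis
    using sX p_pos V cJ unfolding s x XI_def FS_def by (auto simp: flushB_def split: if_splits)
qed

lemma hstep_XH: "s \<in> XH \<Longrightarrow> hstep r s b \<in> XH"
proof -
  assume sX: "s \<in> XH"
  obtain k a c where s: "s = (k, a, c)" by (cases s) auto
  show ?thesis using sX p_pos unfolding s XH_def by auto
qed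

lemma is0_XI: "is0 \<in> XI" unfolding is0_def XI_def FS_def using p_pos by auto

definition SS where "SS = wb * (2 * V1 * V2 + V1 + V2 + 7) + 1"

lemma KK_le:
  assumes "1 \<le> V" "V \<le> n"
  shows "(n + V - 1) div V \<le> n"
proof -
  have "n * V = n + n * (V - 1)" using assms by (cases V) auto
  moreover have "n * (V - 1) \<ge> V - 1" using assms by simp
  ultimately have "n + V - 1 \<le> n * V" by linarith
  hence "(n + V - 1) div V \<le> (n * V) div V" by (rule div_le_mono)
  thus ?thesis using assms by simp
qed

lemma EE_le: "EE \<le> n * n - 1"
proof -
  have "KK1 \<le> n" unfolding KK1_def using V1 by (rule KK_le)
  moreover have "KK2 \<le> n" unfolding KK2_def using V2 by (rule KK_le)
  ultimately have "KK1 * KK2 \<le> n * n" by (rule mult_le_mono)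
  thus ?thesis unfolding EE_def by simp
qed

lemma n_pos: "n \<ge> 1" using V1 by simp

lemma n_lt_p: "n + 1 \<le> p"
proof -
  have "n \<le> n ^ 3" using n_pos by (simp add: power3_eq_cube)
  thus ?thesis using pbig by linarith
qed

lemma NC_lt_p: "NC < p"
proof -
  have nn: "n * n \<ge> 1" using n_pos by simp
  have "EE + 1 \<le> n * n" using EE_le nn by linarith
  hence "NC \<le> 2 * (n * n)" unfolding NC_def by linarith
  also have "\<dots> \<le> 6 * n ^ 3" using n_pos by (simp add: power3_eq_cube)
  finally show ?thesis using pbig by linarith
qed

lemma pow_bound: "p ^ k \<le> 2 ^ (wb * k)"
proof -
  have "p ^ k \<le> (2 ^ wb) ^ k" by (rule power_mono) (use pw in simp_all)
  thus ?thesis by (simp add: power_mult)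
qed

lemma XX_card: "finite XX \<and> card XX \<le> 2 ^ SS"
proof -
  have f1: "finite (FS {..<V1}) \<and> card (FS {..<V1}) \<le> p ^ V1" using FS_card[of "{..<V1}"] by simp
  have f2: "finite (FS {..<V2}) \<and> card (FS {..<V2}) \<le> p ^ V2" using FS_card[of "{..<V2}"] by simp
  have f3: "finite (FS JJ) \<and> card (FS JJ) \<le> p ^ (V1 * V2)" using FS_card[of JJ] by (simp add: JJ_def)
  have cN: "card (insert None (Some ` {..<n})) = n + 1"
    by (subst card_insert_disjoint) (auto simp: card_image)
  have finXI: "finite XI" unfolding XI_def using f1 f2 f3 by simp
  have finXH: "finite XH" unfolding XH_def by simp
  have cXI: "card XI = (n + 1) * (card (FS {..<V1}) * (card (FS {..<V2}) * (card (FS JJ) * (card (FS JJ) * 2))))"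
    unfolding XI_def by (simp add: card_cartesian_product cN)
  have cXH: "card XH = (NB + 2) * (p * p)"
    unfolding XH_def by (simp add: card_cartesian_product)
  have "card XI \<le> 2 ^ wb * (2 ^ (wb * V1) * (2 ^ (wb * V2) * (2 ^ (wb * (V1 * V2)) * (2 ^ (wb * (V1 * V2)) * 2))))"
  proof -
    have a: "n + 1 \<le> 2 ^ wb" using n_lt_p pw by linarith
    have b: "card (FS {..<V1}) \<le> 2 ^ (wb * V1)" using f1 pow_bound[of V1] by linarith
    have c: "card (FS {..<V2}) \<le> 2 ^ (wb * V2)" using f2 pow_bound[of V2] by linarith
    have d: "card (FS JJ) \<le> 2 ^ (wb * (V1 * V2))" using f3 pow_bound[of "V1 * V2"] by linarith
    show ?thesis unfolding cXI
      by (intro mult_le_mono a b c d le_refl)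
  qed
  moreover have "card XH \<le> 2 ^ (3 * wb) * (2 ^ wb * 2 ^ wb)"
  proof -
    have "wb < 2 ^ wb" by (rule less_exp)
    have "NC < 2 ^ wb" using NC_lt_p pw by linarith
    have "NB < 2 ^ wb * 2 ^ wb" unfolding NB_def
      by (rule mult_strict_mono) (use \<open>NC < 2 ^ wb\<close> \<open>wb < 2 ^ wb\<close> in simp_all)
    hence "NB + 2 \<le> 2 ^ wb * 2 ^ wb + 1" by simp
    also have "\<dots> \<le> 2 ^ wb * 2 ^ wb * 2" by simp
    also have "\<dots> \<le> 2 ^ wb * 2 ^ wb * 2 ^ wb"
    proof (intro mult_le_mono le_refl)
      have "(2::nat) ^ 1 \<le> 2 ^ wb" by (rule power_increasing) (use wb in simp_all)
      thus "2 \<le> (2::nat) ^ wb" by simp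
    qed
    also have "\<dots> = 2 ^ (3 * wb)" by (simp add: power_add[symmetric] numeral_3_eq_3)
    finally have "NB + 2 \<le> 2 ^ (3 * wb)" .
    moreover have "p * p \<le> 2 ^ wb * 2 ^ wb" using pw by (intro mult_le_mono) simp_all
    ultimately show ?thesis unfolding cXH by (intro mult_le_mono) (use pw in simp_all)
  qed
  ultimately have "card XX \<le> 2 ^ wb * ((2 ^ wb * (2 ^ (wb * V1) * (2 ^ (wb * V2) * (2 ^ (wb * (V1 * V2)) * (2 ^ (wb * (V1 * V2)) * 2))))) * (2 ^ (3 * wb) * (2 ^ wb * 2 ^ wb)))"
    unfolding XX_def using pw by (simp add: card_cartesian_product) (intro mult_le_mono; simp)
  also have "\<dots> = 2 ^ SS"
  proof -
    have ex: "SS = wb + (wb + (wb*V1 + (wb*V2 + (wb*(V1*V2) + (wb*(V1*V2) + 1))))) + (3*wb + (wb + wb))"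
      unfolding SS_def by (simp add: algebra_simps)
    show ?thesis unfolding ex by (simp only: power_add power_one_right)
  qed
  finally show ?thesis unfolding XX_def using finXI finXH by simp
qed

definition stI :: "nat \<times> istate \<times> (nat \<times> nat \<times> nat) \<Rightarrow> nat \<times> nat \<Rightarrow> nat \<times> istate \<times> (nat \<times> nat \<times> nat)" where
  "stI s x = (fst s, istep (fst s) (fst (snd s)) x, snd (snd s))"
definition stH :: "nat \<times> istate \<times> (nat \<times> nat \<times> nat) \<Rightarrow> bool \<Rightarrow> nat \<times> istate \<times> (nat \<times> nat \<times> nat)" where
  "stH s b = (fst s, fst (snd s), hstep (fst s) (snd (snd s)) b)"
definition out0 :: "nat \<times> istate \<times> (nat \<times> nat \<times> nat) \<Rightarrow> nat option" where
  "out0 s = (case s of (r, ist, (k, acc, ce)) \<Rightarrow>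
      if snd (snd (snd (snd (snd ist)))) = False \<and> k = NB \<and> acc = chkf ist then Some (ce div 6) else None)"
definition Eof :: "(nat \<times> nat) list \<Rightarrow> nat \<Rightarrow> nat \<Rightarrow> bool" where
  "Eof \<sigma> = (\<lambda>b c. (b, c) \<in> set \<sigma>)"
definition csh :: "(nat \<Rightarrow> nat \<Rightarrow> bool) \<Rightarrow> nat \<Rightarrow> nat" where
  "csh E i = nat (coeff (GG E) i mod int p)"
definition honest :: "(nat \<times> nat) list \<Rightarrow> bool list" where
  "honest \<sigma> = hmsg (csh (Eof \<sigma>))"

lemma foldl_stI: "foldl stI (r, ist, hs) \<sigma> = (r, foldl (istep r) ist \<sigma>, hs)"
  by (induction \<sigma> arbitrary: ist) (auto simp: stI_def)
lemma foldl_stH: "foldl stH (r, ist, hs) m = (r, ist, foldl (hstep r) hs m)"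
  by (induction m arbitrary: hs) (auto simp: stH_def)

lemma Eof_eq:
  assumes g: "simple_graph n E" and a: "adj_stream n E \<sigma>"
  shows "Eof \<sigma> = E"
proof -
  obtain vs ls where vs: "distinct vs" "set vs = {..<n}" "length ls = length vs"
    and ls: "\<forall>i < length vs. distinct (ls ! i) \<and> set (ls ! i) = {w. E (vs ! i) w}"
    and sig: "\<sigma> = concat (map2 (\<lambda>v l. map (Pair v) l) vs ls)"
    using a unfolding adj_stream_def by blast
  have Ebd: "\<And>u w. E u w \<Longrightarrow> u < n \<and> w < n" using g unfolding simple_graph_def by blast
  have "(b, c) \<in> set \<sigma> \<longleftrightarrow> E b c" for b c
  proof
    assume "(b, c) \<in> set \<sigma>"
    then obtain i where "i < length vs" "b = vs ! i" "c \<in> set (ls ! i)"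
      unfolding sig using vs(3) by (auto simp: in_set_zip)
    thus "E b c" using ls by auto
  next
    assume e: "E b c"
    hence "b \<in> set vs" using Ebd vs(2) by auto
    then obtain i where i: "i < length vs" "b = vs ! i" by (auto simp: in_set_conv_nth)
    hence "c \<in> set (ls ! i)" using ls e by auto
    hence "(vs ! i, ls ! i) \<in> set (zip vs ls)" using i vs(3) by (auto simp: in_set_zip)
    thus "(b, c) \<in> set \<sigma>" unfolding sig using i \<open>c \<in> set (ls ! i)\<close> by force
  qed
  thus ?thesis unfolding Eof_def by (auto simp: fun_eq_iff)
qed

lemma poly_lt_sum:
  fixes q :: "int poly"
  assumes "degree q < N"
  shows "poly q x = (\<Sum>i<N. coeff q i * x ^ i)"
proof -
  have "poly q x = (\<Sum>i\<le>degree q. coeff q i * x ^ i)" by (rule poly_altdef)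
  also have "\<dots> = (\<Sum>i<N. coeff q i * x ^ i)"
    by (rule sum.mono_neutral_left) (use assms in \<open>auto simp: coeff_eq_0\<close>)
  finally show ?thesis .
qed

lemma ordered_le: "card {(a, b, c). a < n \<and> b < n \<and> c < n \<and> P a b c} \<le> n ^ 3"
proof -
  have "card {(a, b, c). a < n \<and> b < n \<and> c < n \<and> P a b c} \<le> card ({..<n} \<times> {..<n} \<times> {..<n})"
    by (rule card_mono) auto
  thus ?thesis by (simp add: card_cartesian_product power3_eq_cube)
qed

lemma EE_lt_NC: "EE < NC" unfolding NC_def by simp

lemma sixT_lt_p:
  assumes g: "simple_graph n E"
  shows "6 * triangle_count n E < p"
proof -
  have "6 * triangle_count n E \<le> n ^ 3"
    using ordered_triangles[OF g] ordered_le[of "\<lambda>a b c. E a b \<and> E b c \<and> E a c"] by simp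
  also have "\<dots> \<le> 6 * n ^ 3" by simp
  finally show ?thesis using pbig by linarith
qed

lemma coeff_EE_T:
  assumes g: "simple_graph n E"
  shows "coeff (GG E) EE = int (6 * triangle_count n E)"
  using coeff_GG_EE[OF g] ordered_triangles[OF g] by simp

lemma gval_mod:
  "int ((\<Sum>i<NC. csh E i * r ^ i) mod p) = int (Gval E r mod p)"
proof -
  have deg: "degree (GG E) < NC" using degree_GG[of E] unfolding NC_def by simp
  have "int ((\<Sum>i<NC. csh E i * r ^ i) mod p) = (\<Sum>i<NC. int (csh E i) * int r ^ i) mod int p"
    by (simp add: of_nat_mod of_nat_sum)
  also have "\<dots> = (\<Sum>i<NC. (coeff (GG E) i mod int p) * int r ^ i) mod int p"
    unfolding csh_def using p_pos by simp
  also have "\<dots> = (\<Sum>i<NC. ((coeff (GG E) i mod int p) * int r ^ i) mod int p) mod int p"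
    by (simp add: mod_sum_eq)
  also have "\<dots> = (\<Sum>i<NC. (coeff (GG E) i * int r ^ i) mod int p) mod int p"
    by (simp add: mod_mult_left_eq)
  also have "\<dots> = (\<Sum>i<NC. coeff (GG E) i * int r ^ i) mod int p"
    by (simp add: mod_sum_eq)
  also have "(\<Sum>i<NC. coeff (GG E) i * int r ^ i) = poly (GG E) (int r)"
    using poly_lt_sum[OF deg] by simp
  also have "\<dots> = int (Gval E r)" by (rule poly_GG)
  finally show ?thesis by (simp add: of_nat_mod)
qed

lemma completeness:
  assumes g: "simple_graph n E" and a: "adj_stream n E \<sigma>"
  shows "out0 (foldl stH (foldl stI (r, is0, (0, 0, 0)) \<sigma>) (honest \<sigma>)) = Some (triangle_count n E)"
proof -
  have Eq: "Eof \<sigma> = E" by (rule Eof_eq[OF g a])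
  define hm where "hm = hmsg (csh E)"
  have hon: "honest \<sigma> = hm" unfolding honest_def hm_def Eq ..
  have len: "length hm = NB" unfolding hm_def by simp
  have hr: "foldl (hstep r) (0, 0, 0) hm = (NB, hsum r hm mod p, csum hm mod p)"
    using help_run[of hm r] len by simp
  have cslt: "csh E i < p" for i unfolding csh_def using p_pos
    by (simp add: nat_less_iff)
  have cfh: "cf hm i = csh E i" if "i < NC" for i
  proof -
    have "cf hm i = csh E i mod 2 ^ wb" unfolding hm_def by (rule cf_hmsg[OF that])
    also have "\<dots> = csh E i" using cslt[of i] pw by simp
    finally show ?thesis .
  qed
  have hs: "hsum r hm = (\<Sum>i<NC. csh E i * r ^ i)"
    using hsum_full[OF len, of r] cfh by simp
  have cs: "csum hm = csh E EE" using csum_full[OF len] cfh[OF EE_lt_NC] by simp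
  have cE: "csh E EE = 6 * triangle_count n E"
  proof -
    have "csh E EE = nat (int (6 * triangle_count n E) mod int p)"
      unfolding csh_def coeff_EE_T[OF g] ..
    also have "\<dots> = 6 * triangle_count n E"
      using sixT_lt_p[OF g] by (simp add: nat_mod_distrib del: of_nat_mult)
    finally show ?thesis .
  qed
  have chk: "chkf (foldl (istep r) is0 \<sigma>) = Gval E r mod p"
    using valid_chk(1)[OF g a, of r] Gval_eq by simp
  have bad: "snd (snd (snd (snd (snd (foldl (istep r) is0 \<sigma>))))) = False"
    using valid_chk(2)[OF g a] .
  have accok: "hsum r hm mod p = chkf (foldl (istep r) is0 \<sigma>)"
    unfolding chk hs using gval_mod[of E r] by (simp only: of_nat_eq_iff)
  have ce: "csum hm mod p = 6 * triangle_count n E"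
    unfolding cs cE using sixT_lt_p[OF g] by simp
  show ?thesis
    unfolding hon foldl_stI foldl_stH hr out0_def using bad accok ce by simp
qed

lemma soundness:
  assumes g: "simple_graph n E" and a: "adj_stream n E \<sigma>"
  shows "card {r \<in> {..<p}. out0 (foldl stH (foldl stI (r, is0, (0, 0, 0)) \<sigma>) m)
            \<notin> {Some (triangle_count n E), None}} \<le> 2 * EE"
proof -
  define T where "T = triangle_count n E"
  define F where "F = (\<lambda>r. out0 (foldl stH (foldl stI (r, is0, (0, 0, 0)) \<sigma>) m))"
  define B where "B = {r \<in> {..<p}. F r \<notin> {Some T, None}}"
  have Fr: "F r = (case foldl (hstep r) (0, 0, 0) m of (k, acc, ce) \<Rightarrow>
      if snd (snd (snd (snd (snd (foldl (istep r) is0 \<sigma>))))) = False \<and> k = NB \<and> acc = chkf (foldl (istep r) is0 \<sigma>)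
      then Some (ce div 6) else None)" for r
    unfolding F_def foldl_stI foldl_stH out0_def by simp
  have chk: "chkf (foldl (istep r) is0 \<sigma>) = Gval E r mod p" for r
    using valid_chk(1)[OF g a, of r] Gval_eq by simp
  show ?thesis
  proof (cases "length m = NB")
    case False
    have "B = {}"
    proof -
      have "F r = None" for r
      proof (cases "length m \<le> NB")
        case True
        hence "foldl (hstep r) (0, 0, 0) m = (length m, hsum r m mod p, csum m mod p)"
          using help_run[of m r] by simp
        thus ?thesis unfolding Fr using False by simp
      next
        case c: False
        hence "fst (foldl (hstep r) (0, 0, 0) m) = NB + 1" using help_run[of m r] by simp
        thus ?thesis unfolding Fr by (cases "foldl (hstep r) (0, 0, 0) m") auto
      qed
      thus ?thesis unfolding B_def by simp
    qed
    hence "card B = 0" by simp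
    thus ?thesis unfolding B_def F_def T_def by linarith
  next
    case len: True
    have hr: "foldl (hstep r) (0, 0, 0) m = (NB, (\<Sum>i<NC. cf m i * r ^ i) mod p, cf m EE mod p)" for r
      using help_run[of m r] len hsum_full[OF len] csum_full[OF len] by simp
    have FF: "F r = (if snd (snd (snd (snd (snd (foldl (istep r) is0 \<sigma>))))) = False
        \<and> (\<Sum>i<NC. cf m i * r ^ i) mod p = Gval E r mod p then Some (cf m EE mod p div 6) else None)" for r
      unfolding Fr hr chk by simp
    define d where "d = (\<Sum>i<NC. monom (int (cf m i)) i) - GG E"
    have cd: "coeff d EE = int (cf m EE) - int (6 * T)"
      unfolding d_def T_def using EE_lt_NC
      by (simp add: coeff_diff coeff_sum coeff_monom coeff_EE_T[OF g])
    show ?thesis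
    proof (cases "int p dvd coeff d EE")
      case True
      hence "int (cf m EE) mod int p = int (6 * T) mod int p"
        unfolding cd by (simp add: mod_eq_dvd_iff)
      hence "cf m EE mod p = 6 * T mod p" by (simp only: of_nat_mod[symmetric] of_nat_eq_iff)
      also have "\<dots> = 6 * T" using sixT_lt_p[OF g] unfolding T_def by simp
      finally have "cf m EE mod p div 6 = T" by simp
      hence "B = {}" unfolding B_def FF by auto
      hence "card B = 0" by simp
      thus ?thesis unfolding B_def F_def T_def by linarith
    next
      case nd: False
      have sub: "B \<subseteq> {r \<in> {..<p}. int p dvd poly d (int r)}"
      proof
        fix r assume "r \<in> B"
        hence r: "r < p" "F r \<noteq> None" unfolding B_def by auto
        hence "(\<Sum>i<NC. cf m i * r ^ i) mod p = Gval E r mod p" using FF[of r] by (auto split: if_splits)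
        hence "int (\<Sum>i<NC. cf m i * r ^ i) mod int p = int (Gval E r) mod int p"
          by (simp only: of_nat_mod[symmetric] of_nat_eq_iff)
        hence "int p dvd (int (\<Sum>i<NC. cf m i * r ^ i) - int (Gval E r))"
          by (simp add: mod_eq_dvd_iff)
        moreover have "poly d (int r) = int (\<Sum>i<NC. cf m i * r ^ i) - int (Gval E r)"
          unfolding d_def by (simp add: poly_sum poly_monom poly_GG of_nat_sum)
        ultimately show "r \<in> {r \<in> {..<p}. int p dvd poly d (int r)}" using r by simp
      qed
      have "card B \<le> card {r \<in> {..<p}. int p dvd poly d (int r)}"
        by (rule card_mono[OF _ sub]) simp
      also have "\<dots> \<le> degree d" by (rule poly_roots_modp[OF pp nd])
      also have "\<dots> \<le> 2 * EE"
      proof -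
        have "degree (\<Sum>i<NC. monom (int (cf m i)) i) \<le> 2 * EE"
          by (rule degree_sum_le) (auto simp: NC_def intro: order.trans[OF degree_monom_le])
        thus ?thesis unfolding d_def using degree_GG[of E] degree_diff_le_max[of "\<Sum>i<NC. monom (int (cf m i)) i" "GG E"]
          by simp
      qed
      finally show ?thesis unfolding B_def F_def T_def .
    qed
  qed
qed

lemma proto_scheme: "\<exists>init stepI stepH out help. tc_scheme n NB SS init stepI stepH out help"
proof -
  define init0 where "init0 = map_pmf (\<lambda>r. (r, is0, (0::nat, 0::nat, 0::nat))) (pmf_of_set {..<p})"
  have pne: "{..<p} \<noteq> {}" using p_pos by auto
  have initX: "set_pmf init0 \<subseteq> XX"
    unfolding init0_def XX_def using pne is0_XI p_pos by (auto simp: XH_def)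
  have stIX: "\<And>s x. s \<in> XX \<Longrightarrow> stI s x \<in> XX"
    unfolding XX_def stI_def using istep_XI by auto
  have stHX: "\<And>s b. s \<in> XX \<Longrightarrow> stH s b \<in> XX"
    unfolding XX_def stH_def using hstep_XH by auto
  obtain init stepI stepH out where
    l1: "\<forall>s \<in> set_pmf init. length s \<le> SS" and
    l2: "\<forall>s x. length s \<le> SS \<longrightarrow> (\<forall>s' \<in> set_pmf (stepI s x). length s' \<le> SS)" and
    l3: "\<forall>s b. length s \<le> SS \<longrightarrow> (\<forall>s' \<in> set_pmf (stepH s b). length s' \<le> SS)" and
    eq: "\<forall>\<sigma> m. map_pmf out (final_state init stepI stepH \<sigma> m)
         = map_pmf (\<lambda>s0. out0 (foldl stH (foldl stI s0 \<sigma>) m)) init0"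
    using encode_scheme[where X = XX and S = SS and initf = init0 and stI = stI and stH = stH and outf = out0, OF XX_card[THEN conjunct1] XX_card[THEN conjunct2] initX stIX stHX] by blast
  have main: "measure_pmf.prob (map_pmf out (final_state init stepI stepH \<sigma> (honest \<sigma>)))
          {Some (triangle_count n E)} = 1 \<and>
        (\<forall>m. measure_pmf.prob (map_pmf out (final_state init stepI stepH \<sigma> m))
          (- {Some (triangle_count n E), None}) \<le> 1/3)"
    if g: "simple_graph n E" and a: "adj_stream n E \<sigma>" for E \<sigma>
  proof -
    define T where "T = triangle_count n E"
    have dist: "map_pmf out (final_state init stepI stepH \<sigma> m)
        = map_pmf (\<lambda>r. out0 (foldl stH (foldl stI (r, is0, (0, 0, 0)) \<sigma>) m)) (pmf_of_set {..<p})" for m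
      using eq unfolding init0_def by (simp add: map_pmf_comp)
    have c1: "measure_pmf.prob (map_pmf out (final_state init stepI stepH \<sigma> (honest \<sigma>))) {Some T} = 1"
    proof -
      have "map_pmf (\<lambda>r. out0 (foldl stH (foldl stI (r, is0, (0, 0, 0)) \<sigma>) (honest \<sigma>))) (pmf_of_set {..<p})
          = map_pmf (\<lambda>r. Some T) (pmf_of_set {..<p})"
        by (rule map_pmf_cong[OF refl]) (use completeness[OF g a] in \<open>simp add: T_def\<close>)
      thus ?thesis unfolding dist by (simp add: measure_pmf_single)
    qed
    have c2: "measure_pmf.prob (map_pmf out (final_state init stepI stepH \<sigma> m)) (- {Some T, None}) \<le> 1/3" for m
    proof -
      define F where "F = (\<lambda>r. out0 (foldl stH (foldl stI (r, is0, (0, 0, 0)) \<sigma>) m))"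
      have "measure_pmf.prob (map_pmf out (final_state init stepI stepH \<sigma> m)) (- {Some T, None})
          = measure_pmf.prob (pmf_of_set {..<p}) (F -` (- {Some T, None}))"
        unfolding dist F_def by simp
      also have "\<dots> = card ({..<p} \<inter> F -` (- {Some T, None})) / card {..<p}"
        by (rule measure_pmf_of_set[OF pne]) simp
      also have "{..<p} \<inter> F -` (- {Some T, None}) = {r \<in> {..<p}. out0 (foldl stH (foldl stI (r, is0, (0, 0, 0)) \<sigma>) m)
            \<notin> {Some (triangle_count n E), None}}"
        unfolding F_def T_def by auto
      finally have eqp: "measure_pmf.prob (map_pmf out (final_state init stepI stepH \<sigma> m)) (- {Some T, None})
          = card {r \<in> {..<p}. out0 (foldl stH (foldl stI (r, is0, (0, 0, 0)) \<sigma>) m)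
            \<notin> {Some (triangle_count n E), None}} / p" by simp
      have cb: "real (card {r \<in> {..<p}. out0 (foldl stH (foldl stI (r, is0, (0, 0, 0)) \<sigma>) m)
            \<notin> {Some (triangle_count n E), None}}) \<le> real (2 * EE)"
        using soundness[OF g a, of m] by linarith
      have "6 * EE \<le> p"
      proof -
        have "EE \<le> n * n" using EE_le by linarith
        hence "6 * EE \<le> 6 * (n * n)" by simp
        also have "\<dots> \<le> 6 * n ^ 3" using n_pos by (simp add: power3_eq_cube)
        finally show ?thesis using pbig by linarith
      qed
      hence "real (2 * EE) \<le> real p / 3" by simp
      with cb have "real (card {r \<in> {..<p}. out0 (foldl stH (foldl stI (r, is0, (0, 0, 0)) \<sigma>) m)
            \<notin> {Some (triangle_count n E), None}}) \<le> real p / 3" by linarith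
      hence "real (card {r \<in> {..<p}. out0 (foldl stH (foldl stI (r, is0, (0, 0, 0)) \<sigma>) m)
            \<notin> {Some (triangle_count n E), None}}) / real p \<le> 1 / 3"
        using p_pos by (simp add: divide_simps)
      thus ?thesis unfolding eqp .
    qed
    show ?thesis using c1 c2 unfolding T_def by blast
  qed
  have l4: "\<forall>\<sigma>. length (honest \<sigma>) \<le> NB" unfolding honest_def by simp
  have "tc_scheme n NB SS init stepI stepH out honest"
    unfolding tc_scheme_def
  proof (intro conjI)
    show "\<forall>E \<sigma>. simple_graph n E \<longrightarrow> adj_stream n E \<sigma> \<longrightarrow>
        measure_pmf.prob (map_pmf out (final_state init stepI stepH \<sigma> (honest \<sigma>)))
          {Some (triangle_count n E)} = 1 \<and>
        (\<forall>m. measure_pmf.prob (map_pmf out (final_state init stepI stepH \<sigma> m))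
          (- {Some (triangle_count n E), None}) \<le> 1/3)"
      using main by blast
  qed (fact l1 l2 l3 l4)+
  thus ?thesis by blast
qed

end


lemma floor_half:
  fixes y :: real
  assumes "y \<ge> 1"
  shows "real (nat \<lfloor>y\<rfloor>) \<ge> y / 2" "real (nat \<lfloor>y\<rfloor>) \<le> y" "nat \<lfloor>y\<rfloor> \<ge> 1"
proof -
  have f1: "real_of_int \<lfloor>y\<rfloor> > y - 1" by linarith
  have f2: "\<lfloor>y\<rfloor> \<ge> 1" using assms by simp
  have e: "real (nat \<lfloor>y\<rfloor>) = real_of_int \<lfloor>y\<rfloor>" using f2 by simp
  show "real (nat \<lfloor>y\<rfloor>) \<ge> y / 2" using f1 f2 e by linarith
  show "real (nat \<lfloor>y\<rfloor>) \<le> y" using e by linarith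
  show "nat \<lfloor>y\<rfloor> \<ge> 1" using f2 by linarith
qed

lemma K_real:
  assumes "1 \<le> V" "V \<le> n"
  shows "real ((n + V - 1) div V) \<le> 2 * real n / real V"
proof -
  have "(n + V - 1) div V * V \<le> n + V - 1" by (rule div_times_less_eq_dividend)
  hence "real ((n + V - 1) div V) * real V \<le> real (n + V - 1)" by (metis of_nat_le_iff of_nat_mult)
  hence "real ((n + V - 1) div V) \<le> real (n + V - 1) / real V"
    using assms by (simp add: pos_le_divide_eq)
  also have "\<dots> \<le> 2 * real n / real V"
    using assms by (intro divide_right_mono) auto
  finally show ?thesis .
qed

lemma params:
  fixes n :: nat and h v :: real
  assumes n: "1 \<le> n" and h: "1 \<le> h" and v: "1 \<le> v" and hv: "h * v \<ge> real n ^ 2"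
  defines "V2 \<equiv> min n (nat \<lfloor>v\<rfloor>)" and "V1 \<equiv> max 1 (min n (nat \<lfloor>v / real n\<rfloor>))"
  shows "1 \<le> V1" "V1 \<le> n" "1 \<le> V2" "V2 \<le> n"
    "real (((n + V1 - 1) div V1) * ((n + V2 - 1) div V2)) \<le> 4 * h"
    "real (V1 * V2) \<le> v"
proof -
  have fv: "real (nat \<lfloor>v\<rfloor>) \<ge> v / 2" "real (nat \<lfloor>v\<rfloor>) \<le> v" "nat \<lfloor>v\<rfloor> \<ge> 1"
    using floor_half[OF v] by auto
  show "1 \<le> V1" unfolding V1_def by simp
  show "V1 \<le> n" unfolding V1_def using n by simp
  show "1 \<le> V2" unfolding V2_def using n fv by simp
  show "V2 \<le> n" unfolding V2_def by simp
  have npos: "real n > 0" using n by simp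
  have hv': "real n * real n / v \<le> h" using hv v by (simp add: power2_eq_square pos_divide_le_eq)
  have "real (((n + V1 - 1) div V1) * ((n + V2 - 1) div V2)) \<le> 4 * h \<and> real (V1 * V2) \<le> v"
  proof (cases "v < real n")
    case True
    have "nat \<lfloor>v\<rfloor> \<le> n" using fv True by linarith
    hence V2e: "V2 = nat \<lfloor>v\<rfloor>" unfolding V2_def by simp
    have "v / real n < 1" using True npos by simp
    hence "\<lfloor>v / real n\<rfloor> = 0" using v npos by (intro floor_unique) auto
    hence V1e: "V1 = 1" unfolding V1_def by simp
    have K1: "(n + V1 - 1) div V1 = n" unfolding V1e by simp
    have V2p: "real V2 \<ge> v / 2" "real V2 \<ge> 1" using fv unfolding V2e by auto
    have "real ((n + V2 - 1) div V2) \<le> 2 * real n / real V2"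
      by (rule K_real) (use \<open>1 \<le> V2\<close> \<open>V2 \<le> n\<close> in auto)
    also have "\<dots> \<le> 2 * real n / (v / 2)"
      using V2p v npos by (intro divide_left_mono) auto
    also have "\<dots> = 4 * real n / v" by simp
    finally have K2: "real ((n + V2 - 1) div V2) \<le> 4 * real n / v" .
    have "real (((n + V1 - 1) div V1) * ((n + V2 - 1) div V2)) = real n * real ((n + V2 - 1) div V2)"
      unfolding K1 by simp
    also have "\<dots> \<le> real n * (4 * real n / v)"
      using K2 npos by (intro mult_left_mono) auto
    finally have "real (((n + V1 - 1) div V1) * ((n + V2 - 1) div V2)) \<le> real n * (4 * real n / v)" .
    also have "\<dots> = 4 * (real n * real n / v)" by simp
    also have "\<dots> \<le> 4 * h" using hv' by simp
    finally have A: "real (((n + V1 - 1) div V1) * ((n + V2 - 1) div V2)) \<le> 4 * h" .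
    have B: "real (V1 * V2) \<le> v" unfolding V1e V2e using fv by simp
    show ?thesis using A B by simp
  next
    case False
    hence vn: "v \<ge> real n" by simp
    have "nat \<lfloor>v\<rfloor> \<ge> n" using vn by linarith
    hence V2e: "V2 = n" unfolding V2_def by simp
    have K2: "(n + V2 - 1) div V2 = 1"
    proof -
      have e: "n + n - 1 = (n - 1) + n" using n by simp
      have "((n - 1) + n) div n = (n - 1) div n + 1" using n by (subst div_add_self2) auto
      moreover have "(n - 1) div n = 0" using n by simp
      ultimately have "(n + n - 1) div n = 1" unfolding e by simp
      thus ?thesis unfolding V2e by simp
    qed
    have y1: "v / real n \<ge> 1" using vn npos by simp
    have fy: "real (nat \<lfloor>v / real n\<rfloor>) \<ge> v / real n / 2" "real (nat \<lfloor>v / real n\<rfloor>) \<le> v / real n"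
      "nat \<lfloor>v / real n\<rfloor> \<ge> 1" using floor_half[OF y1] by auto
    have "min n (nat \<lfloor>v / real n\<rfloor>) \<ge> 1" using fy(3) n by simp
    hence V1e: "V1 = min n (nat \<lfloor>v / real n\<rfloor>)" unfolding V1_def by (simp only: max_absorb2)
    have A: "real (((n + V1 - 1) div V1) * ((n + V2 - 1) div V2)) \<le> 4 * h"
    proof (cases "nat \<lfloor>v / real n\<rfloor> \<ge> n")
      case True
      hence "V1 = n" unfolding V1e by simp
      hence "(n + V1 - 1) div V1 = 1" using K2 V2e by simp
      thus ?thesis unfolding K2 using h by simp
    next
      case False
      hence V1f: "V1 = nat \<lfloor>v / real n\<rfloor>" unfolding V1e by simp
      have V1p: "real V1 \<ge> v / real n / 2" "real V1 \<ge> 1" using fy unfolding V1f by auto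
      have "real ((n + V1 - 1) div V1) \<le> 2 * real n / real V1"
        by (rule K_real) (use \<open>1 \<le> V1\<close> \<open>V1 \<le> n\<close> in auto)
      also have "\<dots> \<le> 2 * real n / (v / real n / 2)"
        using V1p v npos by (intro divide_left_mono) auto
      also have "\<dots> = 4 * (real n * real n / v)" using npos v by (simp add: field_simps)
      also have "\<dots> \<le> 4 * h" using hv' by simp
      finally show ?thesis unfolding K2 by simp
    qed
    have "real V1 \<le> v / real n" using fy unfolding V1e by (cases "nat \<lfloor>v / real n\<rfloor> \<le> n") auto
    hence "real V1 * real n \<le> v" using npos by (simp add: pos_le_divide_eq)
    hence B: "real (V1 * V2) \<le> v" unfolding V2e by simp
    show ?thesis using A B by simp
  qed
  thus "real (((n + V1 - 1) div V1) * ((n + V2 - 1) div V2)) \<le> 4 * h" "real (V1 * V2) \<le> v" by auto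
qed


lemma log_bound_wb:
  fixes n p :: nat
  assumes n: "1 \<le> n" and p: "p \<le> 2 * (6 * n ^ 3) ^ 3" and p1: "1 \<le> p"
  shows "real (nat \<lceil>log 2 (real p)\<rceil>) \<le> 10 * (1 + log 2 (real n))"
proof -
  have ln0: "log 2 (real n) \<ge> 0" using n by simp
  have lp0: "log 2 (real p) \<ge> 0" using p1 by simp
  have A: "real (nat \<lceil>log 2 (real p)\<rceil>) \<le> log 2 (real p) + 1"
  proof -
    have "real (nat \<lceil>log 2 (real p)\<rceil>) = real_of_int \<lceil>log 2 (real p)\<rceil>" using lp0 by simp
    thus ?thesis by linarith
  qed
  have B: "log 2 (real p) \<le> log 2 (432 * real n ^ 9)"
  proof -
    have "real p \<le> real (2 * (6 * n ^ 3) ^ 3)" using p by linarith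
    also have "\<dots> = 432 * real n ^ 9" by (simp add: power_mult_distrib power_mult[symmetric])
    finally show ?thesis using p1 n by (subst log_le_cancel_iff) auto
  qed
  have C: "log 2 (432 * real n ^ 9) = log 2 432 + 9 * log 2 (real n)"
    using n by (simp add: log_mult log_nat_power)
  have D: "log 2 (432::real) \<le> 9"
  proof -
    have "log 2 (432::real) \<le> log 2 (2 ^ 9)" by (subst log_le_cancel_iff) auto
    also have "\<dots> = 9" using log_pow_cancel[of "2::real" 9] by simp
    finally show ?thesis .
  qed
  have E: "log 2 (real p) \<le> 9 + 9 * log 2 (real n)" using B C D by linarith
  have F: "real (nat \<lceil>log 2 (real p)\<rceil>) \<le> 10 + 9 * log 2 (real n)" using A E by linarith
  have G: "10 + 9 * log 2 (real n) \<le> 10 * (1 + log 2 (real n))" using ln0 by (simp add: algebra_simps)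
  show ?thesis using F G by (rule order.trans)
qed

theorem theorem4p6:
  shows "\<exists>(c::real) (k::nat). \<forall>(n::nat) (h::real) (v::real).
     1 \<le> n \<longrightarrow> 1 \<le> h \<longrightarrow> 1 \<le> v \<longrightarrow> h * v \<ge> real n ^ 2 \<longrightarrow>
     (\<exists>H S init stepI stepH out help.
        tc_scheme n H S init stepI stepH out help \<and>
        real H \<le> c * h * (1 + log 2 (real n)) ^ k \<and>
        real S \<le> c * v * (1 + log 2 (real n)) ^ k)"
proof (rule exI[of _ 120], rule exI[of _ 1], intro allI impI)
  fix n :: nat and h v :: real
  assume n: "1 \<le> n" and h: "1 \<le> h" and v: "1 \<le> v" and hv: "h * v \<ge> real n ^ 2"
  define V2 where "V2 = min n (nat \<lfloor>v\<rfloor>)"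
  define V1 where "V1 = max 1 (min n (nat \<lfloor>v / real n\<rfloor>))"
  have Pa: "1 \<le> V1" "V1 \<le> n" "1 \<le> V2" "V2 \<le> n"
    "real (((n + V1 - 1) div V1) * ((n + V2 - 1) div V2)) \<le> 4 * h"
    "real (V1 * V2) \<le> v"
    unfolding V1_def V2_def by (rule params[OF n h v hv])+
  have L2: "6 * n ^ 3 \<ge> 2" using n by (simp add: Suc_le_eq)
  obtain p where pp: "prime p" and pl: "6 * n ^ 3 < p" and pu: "p \<le> 2 * (6 * n ^ 3) ^ 3"
    using prime_between[OF L2] by blast
  define wb where "wb = nat \<lceil>log 2 (real p)\<rceil>"
  have p1: "p \<ge> 1" using pl by simp
  have pw: "p \<le> 2 ^ wb"
  proof -
    have "real p = 2 powr (log 2 (real p))" using p1 by simp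
    also have "\<dots> \<le> 2 powr (real wb)" unfolding wb_def by (intro powr_mono) (auto, linarith)
    also have "\<dots> = real (2 ^ wb)" by (simp add: powr_realpow)
    finally show ?thesis by linarith
  qed
  have wb1: "wb \<ge> 1"
  proof (rule ccontr)
    assume "\<not> wb \<ge> 1"
    hence "wb = 0" by simp
    hence "p \<le> 1" using pw by simp
    thus False using prime_gt_1_nat[OF pp] by simp
  qed
  interpret P: proto2 n p V1 V2 wb
    by unfold_locales (use Pa pp pl pw wb1 in auto)
  obtain init stepI stepH out hlp where sch: "tc_scheme n P.NB P.SS init stepI stepH out hlp"
    using P.proto_scheme by blast
  have wbb: "real wb \<le> 10 * (1 + log 2 (real n))"
    unfolding wb_def by (rule log_bound_wb[OF n pu p1])
  have ln0: "log 2 (real n) \<ge> 0" using n by simp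
  have KK: "real (P.KK1 * P.KK2) \<le> 4 * h" using Pa(5) unfolding P.KK1_def P.KK2_def .
  have KK1: "P.KK1 * P.KK2 \<ge> 1"
  proof -
    have "P.KK1 \<ge> 1" unfolding P.KK1_def using Pa(1,2) by (simp add: Suc_le_eq div_greater_zero_iff)
    moreover have "P.KK2 \<ge> 1" unfolding P.KK2_def using Pa(3,4) by (simp add: Suc_le_eq div_greater_zero_iff)
    ultimately show ?thesis by simp
  qed
  have NCb: "P.NC \<le> 2 * (P.KK1 * P.KK2)" unfolding P.NC_def P.EE_def using KK1 by linarith
  have H: "real P.NB \<le> 120 * h * (1 + log 2 (real n)) ^ 1"
  proof -
    have "real P.NB = real P.NC * real wb" unfolding P.NB_def by simp
    also have "\<dots> \<le> (2 * (4 * h)) * real wb"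
    proof (rule mult_right_mono)
      have "real P.NC \<le> 2 * real (P.KK1 * P.KK2)" using NCb by linarith
      thus "real P.NC \<le> 2 * (4 * h)" using KK by linarith
    qed simp
    also have "\<dots> \<le> (2 * (4 * h)) * (10 * (1 + log 2 (real n)))"
      using wbb h by (intro mult_left_mono) auto
    also have "\<dots> \<le> 120 * h * (1 + log 2 (real n))" using h ln0 by simp
    finally show ?thesis by simp
  qed
  have S: "real P.SS \<le> 120 * v * (1 + log 2 (real n)) ^ 1"
  proof -
    define M where "M = V1 * V2"
    have M1: "M \<ge> 1" unfolding M_def using Pa by simp
    have "V1 \<le> M" "V2 \<le> M" unfolding M_def using Pa by simp_all
    hence "2 * V1 * V2 + V1 + V2 + 7 \<le> 11 * M" using M1 unfolding M_def by linarith
    hence "P.SS \<le> wb * (11 * M) + 1" unfolding P.SS_def by (simp add: mult_le_mono2)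
    also have "\<dots> \<le> wb * (11 * M) + wb * M" using wb1 M1 by (simp add: Suc_le_eq)
    also have "\<dots> = 12 * (wb * M)" by simp
    finally have "real P.SS \<le> 12 * (real wb * real M)" by (metis of_nat_le_iff of_nat_mult of_nat_numeral)
    also have "\<dots> \<le> 12 * (real wb * v)"
      using Pa(6) unfolding M_def by (intro mult_left_mono) auto
    also have "\<dots> \<le> 12 * (10 * (1 + log 2 (real n)) * v)"
      using wbb v by (intro mult_left_mono mult_right_mono) auto
    also have "\<dots> = 120 * v * (1 + log 2 (real n))" by simp
    finally show ?thesis by simp
  qed
  show "\<exists>H S init stepI stepH out help.
        tc_scheme n H S init stepI stepH out help \<and>
        real H \<le> 120 * h * (1 + log 2 (real n)) ^ 1 \<and>
        real S \<le> 120 * v * (1 + log 2 (real n)) ^ 1"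
    using sch H S by blast
qed

end
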